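(* Let $1\le p<\infty$. There is a constant $c>0$ such that for all $n,M,N\in\mathbb{N}$ with $$ n\ge c\,M^{-p/2}N\max\big(\log(M^{-p}N),1\big) $$ we have $e_n^q(S'_{N,M},\mathcal{B}_p^N)=0$.
   Context: Throughout, $\log=\log_2$, $\mathbb{N}=\{1,2,\dots\}$, $\mathbb{N}_0=\mathbb{N}\cup\{0\}$, and $\mathbb{Z}[0,N)=\{0,\dots,N-1\}$. Quantum model. Let $D,K$ be nonempty sets, $F$ a nonempty set of functions $D\to K$, $G$ a normed space over $\mathbb{R}$ or $\mathbb{C}$, and $S:F\to G$. Let $H_m=(\mathbb{C}^2)^{\otimes m}$ with canonical basis $|i\rangle$, $i\in\mathbb{Z}[0,2^m)$ (via binary expansion). A quantum query is a tuple $Q=(m,m',m'',Z,\tau,\beta)$ with $m,m',m''\in\mathbb{N}$, $m'+m''\le m$, $\emptyset\ne Z\subseteq\mathbb{Z}[0,2^{m'})$, $\tau:Z\to D$, $\beta:K\to\mathbb{Z}[0,2^{m''})$. For $f\in F$ the unitary $Q_f$ on $H_m=H_{m'}\otimes H_{m''}\otimes H_{m-m'-m''}$ is given on basis states by $Q_f|i\rangle|x\rangle|y\rangle=|i\rangle|x\oplus\beta(f(\tau(i)))\rangle|y\rangle$ if $i\in Z$ and $Q_f|i\rangle|x\rangle|y\rangle=|i\rangle|x\rangle|y\rangle$ otherwise, where $\oplus$ is addition mod $2^{m''}$. A quantum algorithm with no measurement is $(Q,(U_j)_{j=0}^n)$ with $n\in\mathbb{N}_0$ and unitaries $U_j$ on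 $H_{m}$, $m=m(Q)$; it defines $A_f=U_nQ_fU_{n-1}\cdots U_1Q_fU_0$ and uses $n$ queries; $A_f(x,y)$ denotes its matrix entries in the canonical basis. A quantum algorithm from $F$ to $G$ with $k\in\mathbb{N}$ measurements is $A=((A_\ell)_{\ell=0}^{k-1},(b_\ell)_{\ell=0}^{k-1},\varphi)$, where each $A_\ell$ is an algorithm with no measurement on $m_\ell$ qubits, $b_0\in\mathbb{Z}[0,2^{m_0})$, $b_\ell:\prod_{i<\ell}\mathbb{Z}[0,2^{m_i})\to\mathbb{Z}[0,2^{m_\ell})$ for $1\le\ell\le k-1$, and $\varphi:\prod_{\ell<k}\mathbb{Z}[0,2^{m_\ell})\to G$. Its output on $f$ is the probability measure $A(f)$ on $G$ which is the distribution of $\varphi(x_0,\dots,x_{k-1})$, where $(x_0,\dots,x_{k-1})$ has probability $\prod_{\ell=0}^{k-1}|A_{\ell,f}(x_\ell,b_\ell(x_0,\dots,x_{\ell-1}))|^2$ (with $b_0$ a constant). Its number of queries is $n_q(A)=\sum_\ell n_q(A_\ell)$. For a random variable $\zeta$ with distribution $A(f)$, let $e(S,A,f)=\inf\{\varepsilon:\ \mathbf{P}\{\|S(f)-\zeta\|>\varepsilon\}\le 1/4\}$, $e(S,A,F)=\sup_{f\in F}e(S,A,f)$, and the $n$-th minimal query error is $e_n^q(S,F)=\inf\{e(S,A,F): A \text{ a quantum algorithm from } F \text{ to } G \text{ with } n_q(A)\le n\}$. Summation setting. For $N\in\mathbb{N}$, $D=\mathbb{Z}[0,N)$, $K=G=\mathbb{R}$.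 For $1\le p<\infty$, $L_p^N$ is the space of functions $f:\mathbb{Z}[0,N)\to\mathbb{R}$ with norm $\|f\|_{L_p^N}=\big(\frac1N\sum_{i=0}^{N-1}|f(i)|^p\big)^{1/p}$; $\mathcal{B}_p^N=\{f\in L_p^N:\|f\|_{L_p^N}\le 1\}$; and $S_N f=\frac1N\sum_{i=0}^{N-1}f(i)$. For $M\in\mathbb{N}$, $S_{N,M}f=\frac1N\sum_{i\in\mathbb{Z}[0,N),\,|f(i)|<M}f(i)$ and $S'_{N,M}f=S_Nf-S_{N,M}f=\frac1N\sum_{i\in\mathbb{Z}[0,N),\,|f(i)|\ge M}f(i)$. *)

theory Defs
  imports "HOL-Analysis.Analysis" "HOL-Library.Extended_Real"
begin

text \<open>A quantum query Q = (m, m', m'', Z, tau, beta). The input set D is a set of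
  elements of type 'd, the value set K is the whole type 'k.\<close>

record ('d, 'k) qquery =
  qm  :: nat
  qm1 :: nat
  qm2 :: nat
  qZ  :: "nat set"
  qtau :: "nat \<Rightarrow> 'd"
  qbeta :: "'k \<Rightarrow> nat"

definition valid_query :: "'d set \<Rightarrow> ('d, 'k) qquery \<Rightarrow> bool" where
  "valid_query D Q \<longleftrightarrow>
     qm Q \<ge> 1 \<and> qm1 Q \<ge> 1 \<and> qm2 Q \<ge> 1 \<and> qm1 Q + qm2 Q \<le> qm Q \<and>
     qZ Q \<noteq> {} \<and> qZ Q \<subseteq> {..<2 ^ qm1 Q} \<and>
     (\<forall>i\<in>qZ Q. qtau Q i \<in> D) \<and> (\<forall>k. qbeta Q k < 2 ^ qm2 Q)"

text \<open>Operators on H_m are represented by their matrices in the canonical basis,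
  as functions row => column => entry, of which only indices < 2^m are relevant.
  The basis vector |i>|x>|y> of H_m' (x) H_m'' (x) H_(m-m'-m'') has index
  i * 2^(m-m') + x * 2^(m-m'-m'') + y.\<close>

type_synonym cmatrix = "nat \<Rightarrow> nat \<Rightarrow> complex"

definition mmult :: "nat \<Rightarrow> cmatrix \<Rightarrow> cmatrix \<Rightarrow> cmatrix" where
  "mmult d A B = (\<lambda>i j. \<Sum>k<d. A i k * B k j)"

definition unitary_on :: "nat \<Rightarrow> cmatrix \<Rightarrow> bool" where
  "unitary_on d U \<longleftrightarrow>
     (\<forall>i<d. \<forall>j<d. (\<Sum>k<d. cnj (U k i) * U k j) = (if i = j then 1 else 0))"

definition query_image :: "('d, 'k) qquery \<Rightarrow> ('d \<Rightarrow> 'k) \<Rightarrow> nat \<Rightarrow> nat" where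
  "query_image Q f c =
    (let m = qm Q; m' = qm1 Q; m'' = qm2 Q;
         i = c div 2 ^ (m - m');
         x = (c div 2 ^ (m - m' - m'')) mod 2 ^ m'';
         y = c mod 2 ^ (m - m' - m'')
     in if i \<in> qZ Q
        then i * 2 ^ (m - m') + ((x + qbeta Q (f (qtau Q i))) mod 2 ^ m'') * 2 ^ (m - m' - m'') + y
        else c)"

definition query_op :: "('d, 'k) qquery \<Rightarrow> ('d \<Rightarrow> 'k) \<Rightarrow> cmatrix" where
  "query_op Q f = (\<lambda>r c. if r = query_image Q f c then 1 else 0)"

record ('d, 'k) nm_alg =
  nm_query :: "('d, 'k) qquery"
  nm_U :: "cmatrix list"

definition valid_nm_alg :: "'d set \<Rightarrow> ('d, 'k) nm_alg \<Rightarrow> bool" where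
  "valid_nm_alg D A \<longleftrightarrow> valid_query D (nm_query A) \<and> nm_U A \<noteq> [] \<and>
     (\<forall>U\<in>set (nm_U A). unitary_on (2 ^ qm (nm_query A)) U)"

definition nm_queries :: "('d, 'k) nm_alg \<Rightarrow> nat" where
  "nm_queries A = length (nm_U A) - 1"

fun run_ops :: "nat \<Rightarrow> cmatrix \<Rightarrow> cmatrix \<Rightarrow> cmatrix list \<Rightarrow> cmatrix" where
  "run_ops d Qf acc [] = acc"
| "run_ops d Qf acc (U # Us) = run_ops d Qf (mmult d U (mmult d Qf acc)) Us"

text \<open>A_f = U_n Q_f U_(n-1) ... U_1 Q_f U_0.\<close>
definition nm_run :: "('d, 'k) nm_alg \<Rightarrow> ('d \<Rightarrow> 'k) \<Rightarrow> cmatrix" where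
  "nm_run A f = run_ops (2 ^ qm (nm_query A)) (query_op (nm_query A) f)
                        (hd (nm_U A)) (tl (nm_U A))"

text \<open>((A_l)_{l<k}, (b_l)_{l<k}, phi); b l xs is b_l applied to the previous
  outcomes xs = [x_0, ..., x_(l-1)].\<close>
record ('d, 'k, 'g) qalg =
  q_algs :: "('d, 'k) nm_alg list"
  q_b :: "nat \<Rightarrow> nat list \<Rightarrow> nat"
  q_phi :: "nat list \<Rightarrow> 'g"

definition q_k :: "('d, 'k, 'g) qalg \<Rightarrow> nat" where
  "q_k A = length (q_algs A)"

definition q_qubits :: "('d, 'k, 'g) qalg \<Rightarrow> nat \<Rightarrow> nat" where
  "q_qubits A l = qm (nm_query (q_algs A ! l))"

definition prefix_outcomes :: "('d, 'k, 'g) qalg \<Rightarrow> nat \<Rightarrow> nat list set" where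
  "prefix_outcomes A l = {xs. length xs = l \<and> (\<forall>i<l. xs ! i < 2 ^ q_qubits A i)}"

definition outcomes :: "('d, 'k, 'g) qalg \<Rightarrow> nat list set" where
  "outcomes A = prefix_outcomes A (q_k A)"

definition valid_qalg :: "'d set \<Rightarrow> ('d, 'k, 'g) qalg \<Rightarrow> bool" where
  "valid_qalg D A \<longleftrightarrow> q_k A \<ge> 1 \<and>
     (\<forall>B\<in>set (q_algs A). valid_nm_alg D B) \<and>
     (\<forall>l<q_k A. \<forall>xs\<in>prefix_outcomes A l. q_b A l xs < 2 ^ q_qubits A l)"

definition n_q :: "('d, 'k, 'g) qalg \<Rightarrow> nat" where
  "n_q A = (\<Sum>l<q_k A. nm_queries (q_algs A ! l))"

definition outcome_prob :: "('d, 'k, 'g) qalg \<Rightarrow> ('d \<Rightarrow> 'k) \<Rightarrow> nat list \<Rightarrow> real" where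
  "outcome_prob A f xs =
     (\<Prod>l<q_k A. (cmod (nm_run (q_algs A ! l) f (xs ! l) (q_b A l (take l xs)))) ^ 2)"

definition q_err :: "(('d \<Rightarrow> 'k) \<Rightarrow> 'g::real_normed_vector) \<Rightarrow> ('d, 'k, 'g) qalg \<Rightarrow> ('d \<Rightarrow> 'k) \<Rightarrow> ereal" where
  "q_err S A f = Inf {ereal eps | eps.
      (\<Sum>xs\<in>{xs\<in>outcomes A. norm (S f - q_phi A xs) > eps}. outcome_prob A f xs) \<le> 1/4}"

definition q_err_F :: "(('d \<Rightarrow> 'k) \<Rightarrow> 'g::real_normed_vector) \<Rightarrow> ('d, 'k, 'g) qalg \<Rightarrow> ('d \<Rightarrow> 'k) set \<Rightarrow> ereal" where
  "q_err_F S A F = (SUP f\<in>F. q_err S A f)"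

definition min_query_err :: "'d set \<Rightarrow> nat \<Rightarrow> (('d \<Rightarrow> 'k) \<Rightarrow> 'g::real_normed_vector) \<Rightarrow> ('d \<Rightarrow> 'k) set \<Rightarrow> ereal" where
  "min_query_err D n S F = (INF A\<in>{A :: ('d, 'k, 'g) qalg. valid_qalg D A \<and> n_q A \<le> n}. q_err_F S A F)"

text \<open>Functions on Z[0,N) are represented as functions nat => real vanishing outside.\<close>
definition Lp_norm :: "real \<Rightarrow> nat \<Rightarrow> (nat \<Rightarrow> real) \<Rightarrow> real" where
  "Lp_norm p N f = ((1 / real N) * (\<Sum>i<N. \<bar>f i\<bar> powr p)) powr (1 / p)"

definition unit_ball_Lp :: "real \<Rightarrow> nat \<Rightarrow> (nat \<Rightarrow> real) set" where
  "unit_ball_Lp p N = {f. (\<forall>i\<ge>N. f i = 0) \<and> Lp_norm p N f \<le> 1}"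

definition S_NM' :: "nat \<Rightarrow> nat \<Rightarrow> (nat \<Rightarrow> real) \<Rightarrow> real" where
  "S_NM' N M f = (1 / real N) * (\<Sum>i\<in>{i. i < N \<and> \<bar>f i\<bar> \<ge> real M}. f i)"

end

theory Submission
  imports Defs
begin
definition mv :: "nat \<Rightarrow> cmatrix \<Rightarrow> (nat \<Rightarrow> complex) \<Rightarrow> nat \<Rightarrow> complex" where
  "mv d A v = (\<lambda>i. \<Sum>k<d. A i k * v k)"

definition nsq :: "nat \<Rightarrow> (nat \<Rightarrow> complex) \<Rightarrow> real" where
  "nsq d v = (\<Sum>i<d. (cmod (v i))^2)"

lemma run_ops_col:
  "run_ops d Qf acc Us i j = foldl (\<lambda>v U. mv d U (mv d Qf v)) (\<lambda>k. acc k j) Us i"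
proof (induction Us arbitrary: acc)
  case Nil then show ?case by simp
next
  case (Cons U Us)
  have "(\<lambda>k. mmult d U (mmult d Qf acc) k j) = mv d U (mv d Qf (\<lambda>k. acc k j))"
    by (auto simp: mmult_def mv_def sum_distrib_left sum_distrib_right mult.assoc intro!: ext sum.cong)
  then show ?case using Cons by simp
qed

lemma of_real_nsq: "complex_of_real (nsq d v) = (\<Sum>i<d. v i * cnj (v i))"
  unfolding nsq_def of_real_sum by (intro sum.cong refl) (metis complex_norm_square)

lemma unitary_nsq:
  assumes "unitary_on d U"
  shows "nsq d (mv d U v) = nsq d v"
proof -
  have "complex_of_real (nsq d (mv d U v)) =
      (\<Sum>i<d. (\<Sum>k<d. U i k * v k) * (\<Sum>l<d. cnj (U i l) * cnj (v l)))"
    by (simp add: of_real_nsq mv_def)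
  also have "\<dots> = (\<Sum>i<d. \<Sum>k<d. \<Sum>l<d. (v k * cnj (v l)) * (cnj (U i l) * U i k))"
    by (simp add: sum_distrib_left sum_distrib_right mult_ac) (rule sum.cong, simp, rule sum.swap)
  also have "\<dots> = (\<Sum>k<d. \<Sum>l<d. (v k * cnj (v l)) * (\<Sum>i<d. cnj (U i l) * U i k))"
  proof -
    have "(\<Sum>i<d. \<Sum>k<d. \<Sum>l<d. (v k * cnj (v l)) * (cnj (U i l) * U i k))
        = (\<Sum>k<d. \<Sum>i<d. \<Sum>l<d. (v k * cnj (v l)) * (cnj (U i l) * U i k))"
      by (rule sum.swap)
    also have "\<dots> = (\<Sum>k<d. \<Sum>l<d. \<Sum>i<d. (v k * cnj (v l)) * (cnj (U i l) * U i k))"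
      by (rule sum.cong[OF refl], rule sum.swap)
    finally show ?thesis by (simp add: sum_distrib_left)
  qed
  also have "\<dots> = (\<Sum>k<d. \<Sum>l<d. (v k * cnj (v l)) * (if l = k then 1 else 0))"
    using assms unfolding unitary_on_def by (intro sum.cong refl) auto
  also have "\<dots> = (\<Sum>k<d. v k * cnj (v k))"
    by (simp add: if_distrib cong: if_cong)
  also have "\<dots> = complex_of_real (nsq d v)" by (simp add: of_real_nsq)
  finally show ?thesis using of_real_eq_iff by blast
qed

lemma decomp_div:
  fixes i x y A B :: nat
  assumes "x < B" "y < A"
  shows "(i * (B * A) + x * A + y) div (B * A) = i"
    and "((i * (B * A) + x * A + y) div A) mod B = x"
    and "(i * (B * A) + x * A + y) mod A = y"
proof -
  have A: "A > 0" using assms by simp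
  have B: "B > 0" using assms by simp
  have xy: "x * A + y < B * A"
  proof -
    have "x * A + y < x * A + A" using assms by simp
    also have "\<dots> = (x + 1) * A" by simp
    also have "\<dots> \<le> B * A" using assms by (intro mult_right_mono) auto
    finally show ?thesis .
  qed
  show "(i * (B * A) + x * A + y) div (B * A) = i"
    using xy unfolding add.assoc by (metis Euclidean_Rings.div_eq_0_iff add.right_neutral div_mult_self3 not_less_zero)
  have e1: "(i * (B * A) + x * A + y) div A = i * B + x"
  proof -
    have "i * (B * A) + x * A + y = (i * B + x) * A + y" by (simp add: algebra_simps)
    thus ?thesis using assms A by simp
  qed
  show "((i * (B * A) + x * A + y) div A) mod B = x"
    unfolding e1 using assms by simp
  show "(i * (B * A) + x * A + y) mod A = y"
  proof -
    have "i * (B * A) + x * A + y = (i * B + x) * A + y" by (simp add: algebra_simps)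
    thus ?thesis using assms A by simp
  qed
qed

lemma decomp_eq:
  fixes c A B :: nat
  assumes "A > 0" "B > 0"
  shows "c = (c div (B * A)) * (B * A) + ((c div A) mod B) * A + c mod A"
proof -
  have "c div (B * A) = (c div A) div B" by (simp add: div_mult2_eq mult.commute)
  then have "(c div (B * A)) * (B * A) + ((c div A) mod B) * A = (c div A) * A"
    by (metis (no_types) div_mult_mod_eq distrib_right mult.assoc mult.commute)
  then show ?thesis by simp
qed

lemma query_image_bij:
  assumes "valid_query D Q"
  shows "bij_betw (query_image Q f) {..<2 ^ qm Q} {..<2 ^ qm Q}"
proof -
  define m where "m = qm Q"
  define a1 where "a1 = qm1 Q"
  define a2 where "a2 = qm2 Q"
  define e where "e = m - a1 - a2"
  define A :: nat where "A = 2 ^ e"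
  define B :: nat where "B = 2 ^ a2"
  have A0: "A > 0" and B0: "B > 0" by (auto simp: A_def B_def)
  have me: "m = a1 + a2 + e" using assms unfolding valid_query_def m_def a1_def a2_def e_def by auto
  have pw: "(2::nat) ^ (m - a1) = B * A" by (simp add: A_def B_def me power_add)
  have pwe: "(2::nat) ^ (m - a1 - a2) = A" by (simp add: A_def e_def)
  have pm: "(2::nat) ^ m = 2 ^ a1 * (B * A)" by (simp add: A_def B_def me power_add)
  define bt where "bt = (\<lambda>i. qbeta Q (f (qtau Q i)))"
  have img: "query_image Q f c = (if c div (B * A) \<in> qZ Q
        then (c div (B * A)) * (B * A) + (((c div A) mod B + bt (c div (B * A))) mod B) * A + c mod A
        else c)" for c
    unfolding query_image_def Let_def m_def[symmetric] a1_def[symmetric] a2_def[symmetric] pw pwe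
    by (simp add: B_def bt_def)
  have into: "query_image Q f c < 2 ^ m" if "c < 2 ^ m" for c
  proof (cases "c div (B * A) \<in> qZ Q")
    case True
    define i where "i = c div (B * A)"
    have i: "i < 2 ^ a1" using that pm unfolding i_def
      by (metis A0 B0 div_less_iff_less_mult mult_pos_pos mult.commute)
    define x where "x = ((c div A) mod B + bt i) mod B"
    have x: "x < B" using B0 by (simp add: x_def)
    have y: "c mod A < A" using A0 by simp
    have "x * A + c mod A < B * A"
    proof -
      have "x * A + c mod A < x * A + A" using y by simp
      also have "\<dots> = (x + 1) * A" by simp
      also have "\<dots> \<le> B * A" using x by (intro mult_right_mono) auto
      finally show ?thesis .
    qed
    then have "i * (B * A) + x * A + c mod A < i * (B * A) + B * A" by simp
    also have "\<dots> = (i + 1) * (B * A)" by simp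
    also have "\<dots> \<le> 2 ^ a1 * (B * A)" using i by (intro mult_right_mono) auto
    finally show ?thesis using True img[of c] by (simp add: pm i_def x_def)
  next
    case False then show ?thesis using img[of c] that by simp
  qed
  have inj: "inj_on (query_image Q f) {..<2 ^ m}"
  proof (rule inj_onI)
    fix c1 c2 assume c1: "c1 \<in> {..<2 ^ m}" and c2: "c2 \<in> {..<2 ^ m}"
      and eq: "query_image Q f c1 = query_image Q f c2"
    have key: "query_image Q f c div (B * A) = c div (B * A) \<and>
      (query_image Q f c div A) mod B = (if c div (B * A) \<in> qZ Q then ((c div A) mod B + bt (c div (B * A))) mod B else (c div A) mod B) \<and>
      query_image Q f c mod A = c mod A" for c
    proof (cases "c div (B * A) \<in> qZ Q")
      case True
      have x: "((c div A) mod B + bt (c div (B * A))) mod B < B" using B0 by simp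
      have y: "c mod A < A" using A0 by simp
      show ?thesis using True img[of c] decomp_div[OF x y, of "c div (B * A)"] by simp
    next
      case False then show ?thesis using img[of c] by simp
    qed
    have d1: "c1 div (B * A) = c2 div (B * A)" using key[of c1] key[of c2] eq by simp
    have m1: "c1 mod A = c2 mod A" using key[of c1] key[of c2] eq by simp
    have x1: "(c1 div A) mod B = (c2 div A) mod B"
    proof (cases "c1 div (B * A) \<in> qZ Q")
      case True
      then have "((c1 div A) mod B + bt (c1 div (B * A))) mod B = ((c2 div A) mod B + bt (c1 div (B * A))) mod B"
        using key[of c1] key[of c2] eq d1 by simp
      moreover have gen: "\<And>a b t. (a + t) mod B = (b + t) mod B \<Longrightarrow> a mod B = b mod (B::nat)"
        by (simp add: mod_eq_iff_dvd_symdiff_nat)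
      ultimately have "((c1 div A) mod B) mod B = ((c2 div A) mod B) mod B"
        by blast
      then show ?thesis by simp
    next
      case False then show ?thesis using key[of c1] key[of c2] eq d1 by simp
    qed
    show "c1 = c2" using decomp_eq[OF A0 B0, of c1] decomp_eq[OF A0 B0, of c2] d1 m1 x1 by simp
  qed
  have "query_image Q f ` {..<2 ^ m} = {..<2 ^ m}"
    by (rule endo_inj_surj) (use into inj in auto)
  then show ?thesis using inj unfolding bij_betw_def m_def by simp
qed

lemma perm_nsq:
  assumes "bij_betw \<pi> {..<d} {..<d}"
  shows "nsq d (mv d (\<lambda>r c. if r = \<pi> c then 1 else 0) v) = nsq d v"
proof -
  have inj: "inj_on \<pi> {..<d}" using assms bij_betw_def by blast
  have "nsq d (mv d (\<lambda>r c. if r = \<pi> c then 1 else 0) v)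
      = (\<Sum>k<d. (cmod (mv d (\<lambda>r c. if r = \<pi> c then 1 else 0) v (\<pi> k)))^2)"
    unfolding nsq_def using sum.reindex_bij_betw[OF assms, of "\<lambda>c. (cmod (mv d (\<lambda>r c. if r = \<pi> c then 1 else 0) v c))^2"]
    by simp
  also have "\<dots> = (\<Sum>k<d. (cmod (v k))^2)"
  proof (intro sum.cong refl)
    fix k assume k: "k \<in> {..<d}"
    have "mv d (\<lambda>r c. if r = \<pi> c then 1 else 0) v (\<pi> k) = (\<Sum>k'<d. if k' = k then v k' else 0)"
      unfolding mv_def
    proof (intro sum.cong refl)
      fix k' assume "k' \<in> {..<d}"
      then show "(if \<pi> k = \<pi> k' then 1 else 0) * v k' = (if k' = k then v k' else 0)"
        using inj k by (auto dest: inj_onD)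
    qed
    also have "\<dots> = v k" using k by simp
    finally show "(cmod (mv d (\<lambda>r c. if r = \<pi> c then 1 else 0) v (\<pi> k)))^2 = (cmod (v k))^2" by simp
  qed
  finally show ?thesis by (simp add: nsq_def)
qed

lemma query_nsq:
  assumes "valid_query D Q"
  shows "nsq (2 ^ qm Q) (mv (2 ^ qm Q) (query_op Q f) v) = nsq (2 ^ qm Q) v"
  using perm_nsq[OF query_image_bij[OF assms, of f]] unfolding query_op_def .

lemma foldl_nsq:
  assumes "\<And>w. nsq d (mv d Qf w) = nsq d w" "\<forall>U\<in>set Us. unitary_on d U"
  shows "nsq d (foldl (\<lambda>v U. mv d U (mv d Qf v)) v0 Us) = nsq d v0"
  using assms(2)
proof (induction Us arbitrary: v0)
  case Nil then show ?case by simp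
next
  case (Cons U Us)
  then show ?case by (simp add: unitary_nsq assms(1))
qed

lemma unitary_col_nsq:
  assumes "unitary_on d U" "b < d"
  shows "nsq d (\<lambda>k. U k b) = 1"
proof -
  have "complex_of_real (nsq d (\<lambda>k. U k b)) = (\<Sum>k<d. cnj (U k b) * U k b)"
    by (simp add: of_real_nsq mult.commute)
  also have "\<dots> = 1" using assms unfolding unitary_on_def by simp
  finally show ?thesis by (metis of_real_eq_1_iff)
qed

lemma nm_run_norm:
  assumes "valid_nm_alg D B" "b < 2 ^ qm (nm_query B)"
  shows "(\<Sum>x<2 ^ qm (nm_query B). (cmod (nm_run B f x b))^2) = 1"
proof -
  define d :: nat where "d = 2 ^ qm (nm_query B)"
  have U: "\<forall>U\<in>set (nm_U B). unitary_on d U" and ne: "nm_U B \<noteq> []"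
    and vq: "valid_query D (nm_query B)"
    using assms(1) unfolding valid_nm_alg_def d_def by auto
  have "nm_run B f x b = foldl (\<lambda>v U. mv d U (mv d (query_op (nm_query B) f) v)) (\<lambda>k. hd (nm_U B) k b) (tl (nm_U B)) x" for x
    unfolding nm_run_def d_def by (rule run_ops_col)
  then have "(\<Sum>x<d. (cmod (nm_run B f x b))^2) = nsq d (foldl (\<lambda>v U. mv d U (mv d (query_op (nm_query B) f) v)) (\<lambda>k. hd (nm_U B) k b) (tl (nm_U B)))"
    by (simp add: nsq_def)
  also have "\<dots> = nsq d (\<lambda>k. hd (nm_U B) k b)"
    by (rule foldl_nsq) (use query_nsq[OF vq] U ne in \<open>auto simp: d_def dest: list.set_sel(2)\<close>)
  also have "\<dots> = 1"
    by (rule unitary_col_nsq) (use U ne assms(2) in \<open>auto simp: d_def\<close>)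
  finally show ?thesis by (simp add: d_def)
qed

definition PL :: "(nat \<Rightarrow> nat set) \<Rightarrow> nat \<Rightarrow> nat list set" where
  "PL S L = {xs. length xs = L \<and> (\<forall>i<L. xs ! i \<in> S i)}"

lemma PL_0: "PL S 0 = {[]}" by (auto simp: PL_def)

lemma PL_Suc: "PL S (Suc L) = (\<lambda>(ys, x). ys @ [x]) ` (PL S L \<times> S L)"
proof (intro equalityI subsetI)
  fix xs assume "xs \<in> PL S (Suc L)"
  then have l: "length xs = Suc L" and s: "\<forall>i<Suc L. xs ! i \<in> S i" by (auto simp: PL_def)
  then obtain ys x where xs: "xs = ys @ [x]" by (metis length_Suc_conv_rev)
  have "ys \<in> PL S L" using l s unfolding xs PL_def by (auto simp: nth_append) (metis less_SucI nth_append)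
  moreover have "x \<in> S L" using l s[rule_format, of L] unfolding xs by (metis lessI length_append_singleton nat.inject nth_append_length)
  ultimately show "xs \<in> (\<lambda>(ys, x). ys @ [x]) ` (PL S L \<times> S L)" using xs by auto
next
  fix xs assume "xs \<in> (\<lambda>(ys, x). ys @ [x]) ` (PL S L \<times> S L)"
  then obtain ys x where xs: "xs = ys @ [x]" and ys: "ys \<in> PL S L" and x: "x \<in> S L" by auto
  show "xs \<in> PL S (Suc L)" using ys x unfolding xs PL_def by (auto simp: nth_append less_Suc_eq)
qed

lemma PL_inj: "inj_on (\<lambda>(ys, x). ys @ [x]) (PL S L \<times> S L)"
  by (auto intro!: inj_onI)

lemma PL_finite: "(\<And>i. i < L \<Longrightarrow> finite (S i)) \<Longrightarrow> finite (PL S L)"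
  by (induction L) (auto simp: PL_0 PL_Suc)

lemma sum_PL_Suc:
  assumes "\<And>i. i \<le> L \<Longrightarrow> finite (S i)"
  shows "(\<Sum>xs\<in>PL S (Suc L). F xs) = (\<Sum>ys\<in>PL S L. \<Sum>x\<in>S L. F (ys @ [x]))"
proof -
  have "(\<Sum>xs\<in>PL S (Suc L). F xs) = (\<Sum>p\<in>PL S L \<times> S L. F ((\<lambda>(ys, x). ys @ [x]) p))"
    unfolding PL_Suc by (rule sum.reindex[OF PL_inj, unfolded comp_def])
  also have "\<dots> = (\<Sum>ys\<in>PL S L. \<Sum>x\<in>S L. F (ys @ [x]))"
    unfolding sum.cartesian_product by (rule sum.cong) auto
  finally show ?thesis .
qed

lemma norm_PL:
  assumes fin: "\<And>i. finite (S i)"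
    and one: "\<And>l ys. l < L \<Longrightarrow> ys \<in> PL S l \<Longrightarrow> (\<Sum>x\<in>S l. g l x ys) = (1::real)"
  shows "(\<Sum>xs\<in>PL S L. \<Prod>l<L. g l (xs ! l) (take l xs)) = 1"
  using one
proof (induction L)
  case 0 then show ?case by (simp add: PL_0)
next
  case (Suc L)
  have "(\<Sum>xs\<in>PL S (Suc L). \<Prod>l<Suc L. g l (xs ! l) (take l xs))
      = (\<Sum>ys\<in>PL S L. \<Sum>x\<in>S L. \<Prod>l<Suc L. g l ((ys @ [x]) ! l) (take l (ys @ [x])))"
    by (rule sum_PL_Suc) (use fin in auto)
  also have "\<dots> = (\<Sum>ys\<in>PL S L. \<Sum>x\<in>S L. (\<Prod>l<L. g l (ys ! l) (take l ys)) * g L x ys)"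
  proof (intro sum.cong refl)
    fix ys x assume ys: "ys \<in> PL S L"
    then have len: "length ys = L" by (simp add: PL_def)
    have "(\<Prod>l<Suc L. g l ((ys @ [x]) ! l) (take l (ys @ [x]))) =
        (\<Prod>l<L. g l ((ys @ [x]) ! l) (take l (ys @ [x]))) * g L x ys"
      using len by (simp add: nth_append)
    also have "(\<Prod>l<L. g l ((ys @ [x]) ! l) (take l (ys @ [x]))) = (\<Prod>l<L. g l (ys ! l) (take l ys))"
      using len by (intro prod.cong refl) (auto simp: nth_append)
    finally show "(\<Prod>l<Suc L. g l ((ys @ [x]) ! l) (take l (ys @ [x]))) = (\<Prod>l<L. g l (ys ! l) (take l ys)) * g L x ys" .
  qed
  also have "\<dots> = (\<Sum>ys\<in>PL S L. (\<Prod>l<L. g l (ys ! l) (take l ys)))"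
    by (intro sum.cong refl) (simp add: sum_distrib_left[symmetric] Suc.prems)
  also have "\<dots> = 1" using Suc by simp
  finally show ?case .
qed

lemma prod_PL:
  assumes fin: "\<And>i. finite (S i)"
  shows "(\<Sum>xs\<in>PL S L. \<Prod>l<L. g l (xs ! l)) = (\<Prod>l<L. \<Sum>x\<in>S l. (g l x :: real))"
proof (induction L)
  case 0 then show ?case by (simp add: PL_0)
next
  case (Suc L)
  have "(\<Sum>xs\<in>PL S (Suc L). \<Prod>l<Suc L. g l (xs ! l))
      = (\<Sum>ys\<in>PL S L. \<Sum>x\<in>S L. \<Prod>l<Suc L. g l ((ys @ [x]) ! l))"
    by (rule sum_PL_Suc) (use fin in auto)
  also have "\<dots> = (\<Sum>ys\<in>PL S L. \<Sum>x\<in>S L. (\<Prod>l<L. g l (ys ! l)) * g L x)"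
  proof (intro sum.cong refl)
    fix ys x assume ys: "ys \<in> PL S L"
    then have len: "length ys = L" by (simp add: PL_def)
    have "(\<Prod>l<Suc L. g l ((ys @ [x]) ! l)) = (\<Prod>l<L. g l ((ys @ [x]) ! l)) * g L x"
      using len by (simp add: nth_append)
    also have "(\<Prod>l<L. g l ((ys @ [x]) ! l)) = (\<Prod>l<L. g l (ys ! l))"
      using len by (intro prod.cong refl) (auto simp: nth_append)
    finally show "(\<Prod>l<Suc L. g l ((ys @ [x]) ! l)) = (\<Prod>l<L. g l (ys ! l)) * g L x" .
  qed
  also have "\<dots> = (\<Sum>ys\<in>PL S L. \<Prod>l<L. g l (ys ! l)) * (\<Sum>x\<in>S L. g L x)"
    by (simp add: sum_product)
  also have "\<dots> = (\<Prod>l<Suc L. \<Sum>x\<in>S l. g l x)" using Suc by simp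
  finally show ?case .
qed

lemma prefix_outcomes_PL: "prefix_outcomes A l = PL (\<lambda>i. {..<2 ^ q_qubits A i}) l"
  by (simp add: prefix_outcomes_def PL_def)

lemma total_prob:
  assumes "valid_qalg D A"
  shows "(\<Sum>xs\<in>outcomes A. outcome_prob A f xs) = 1"
proof -
  have "(\<Sum>xs\<in>outcomes A. outcome_prob A f xs) =
      (\<Sum>xs\<in>PL (\<lambda>i. {..<2 ^ q_qubits A i}) (q_k A).
         \<Prod>l<q_k A. (\<lambda>l x ys. (cmod (nm_run (q_algs A ! l) f x (q_b A l ys)))^2) l (xs ! l) (take l xs))"
    by (simp add: outcomes_def prefix_outcomes_PL outcome_prob_def)
  also have "\<dots> = 1"
  proof (rule norm_PL)
    fix l ys assume l: "l < q_k A" and ys: "ys \<in> PL (\<lambda>i. {..<2 ^ q_qubits A i}) l"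
    have v: "valid_nm_alg D (q_algs A ! l)" using assms l unfolding valid_qalg_def q_k_def by auto
    have b: "q_b A l ys < 2 ^ qm (nm_query (q_algs A ! l))"
      using assms l ys unfolding valid_qalg_def prefix_outcomes_PL q_qubits_def by auto
    show "(\<Sum>x\<in>{..<2 ^ q_qubits A l}. (cmod (nm_run (q_algs A ! l) f x (q_b A l ys)))^2) = 1"
      using nm_run_norm[OF v b] by (simp add: q_qubits_def)
  qed simp
  finally show ?thesis .
qed

lemma q_err_nonneg:
  assumes "valid_qalg D A"
  shows "0 \<le> q_err S A f"
  unfolding q_err_def
proof (rule Inf_greatest, clarify)
  fix eps :: real
  assume h: "(\<Sum>xs\<in>{xs \<in> outcomes A. eps < norm (S f - q_phi A xs)}. outcome_prob A f xs) \<le> 1/4"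
  show "0 \<le> ereal eps"
  proof (rule ccontr)
    assume "\<not> 0 \<le> ereal eps"
    then have "eps < 0" by simp
    then have "{xs \<in> outcomes A. eps < norm (S f - q_phi A xs)} = outcomes A"
      by (auto intro: less_le_trans)
    then show False using h total_prob[OF assms, of f] by simp
  qed
qed

lemma min_query_err_nonneg:
  fixes S :: "('d \<Rightarrow> 'k) \<Rightarrow> 'g::real_normed_vector"
  assumes "F \<noteq> {}"
  shows "0 \<le> min_query_err D n S F"
  unfolding min_query_err_def
proof (rule INF_greatest)
  fix A :: "('d, 'k, 'g) qalg" assume "A \<in> {A. valid_qalg D A \<and> n_q A \<le> n}"
  then have "valid_qalg D A" by simp
  show "0 \<le> q_err_F S A F"
    unfolding q_err_F_def
  proof -
    obtain f where "f \<in> F" using assms by blast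
    then have "q_err S A f \<le> (SUP f\<in>F. q_err S A f)" by (rule SUP_upper)
    then show "0 \<le> (SUP f\<in>F. q_err S A f)" using q_err_nonneg[OF \<open>valid_qalg D A\<close>] by (rule order.trans[rotated])
  qed
qed

definition cm :: "(nat \<Rightarrow> nat \<Rightarrow> real) \<Rightarrow> cmatrix" where
  "cm R = (\<lambda>i j. complex_of_real (R i j))"

definition rmv :: "nat \<Rightarrow> (nat \<Rightarrow> nat \<Rightarrow> real) \<Rightarrow> (nat \<Rightarrow> real) \<Rightarrow> nat \<Rightarrow> real" where
  "rmv d A v = (\<lambda>i. \<Sum>k<d. A i k * v k)"

lemma mv_cm: "mv d (cm R) (\<lambda>k. complex_of_real (v k)) = (\<lambda>i. complex_of_real (rmv d R v i))"
  by (simp add: mv_def cm_def rmv_def)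

lemma foldl_cm:
  "foldl (\<lambda>v U. mv d U (mv d (cm Qr) v)) (\<lambda>k. complex_of_real (v0 k)) (map cm Rs)
   = (\<lambda>i. complex_of_real (foldl (\<lambda>v U. rmv d U (rmv d Qr v)) v0 Rs i))"
  by (induction Rs arbitrary: v0) (simp_all add: mv_cm)

lemma rmv_cong: "(\<And>k. k < d \<Longrightarrow> v k = w k) \<Longrightarrow> rmv d A v = rmv d A w"
  by (simp add: rmv_def)

lemma foldl_rmv_cong:
  assumes "\<And>k. k < d \<Longrightarrow> v k = w k" "c < d"
  shows "foldl (\<lambda>v U. rmv d U (rmv d Qr v)) v Us c = foldl (\<lambda>v U. rmv d U (rmv d Qr v)) w Us c"
proof (cases Us)
  case Nil then show ?thesis using assms by simp
next
  case (Cons U Us')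
  have "rmv d Qr v = rmv d Qr w" using assms(1) by (rule rmv_cong)
  then show ?thesis using Cons by simp
qed

lemma sum_delta_mult: "c < (n::nat) \<Longrightarrow> (\<Sum>k<n. (if c = k then 1 else 0) * f k) = (f c :: real)"
  by (simp add: of_bool_def[symmetric])

lemma sum_delta_mult': "c < (n::nat) \<Longrightarrow> (\<Sum>k<n. f k * (if k = c then 1 else 0)) = (f c :: real)"
  by (simp add: of_bool_def[symmetric])

definition refl :: "nat \<Rightarrow> (nat \<Rightarrow> real) \<Rightarrow> nat \<Rightarrow> nat \<Rightarrow> real" where
  "refl n w = (\<lambda>i j. (if i = j then 1 else 0) - 2 * w i * w j / (\<Sum>k<n. (w k)^2))"

lemma refl_apply:
  assumes "c < n"
  shows "rmv n (refl n w) v c = v c - 2 * w c * (\<Sum>k<n. w k * v k) / (\<Sum>k<n. (w k)^2)"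
proof -
  have "rmv n (refl n w) v c = (\<Sum>k<n. (if c = k then 1 else 0) * v k) - (\<Sum>k<n. 2 * w c * w k / (\<Sum>k<n. (w k)^2) * v k)"
    unfolding rmv_def refl_def by (simp only: left_diff_distrib sum_subtractf)
  also have "(\<Sum>k<n. (if c = k then 1 else 0) * v k) = v c" by (rule sum_delta_mult[OF assms])
  also have "(\<Sum>k<n. 2 * w c * w k / (\<Sum>k<n. (w k)^2) * v k) = 2 * w c * (\<Sum>k<n. w k * v k) / (\<Sum>k<n. (w k)^2)"
    by (simp add: sum_distrib_left sum_divide_distrib mult_ac)
  finally show ?thesis .
qed

lemma unitary_refl:
  assumes S: "(\<Sum>k<n. (w k)^2) \<noteq> 0"
  shows "unitary_on n (cm (refl n w))"
  unfolding unitary_on_def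
proof (intro allI impI)
  fix i j assume i: "i < n" and j: "j < n"
  define S where "S = (\<Sum>k<n. (w k)^2)"
  have "(\<Sum>k<n. cnj (cm (refl n w) k i) * cm (refl n w) k j)
      = complex_of_real (\<Sum>k<n. refl n w k i * refl n w k j)"
    by (simp add: cm_def)
  also have "(\<Sum>k<n. refl n w k i * refl n w k j) = rmv n (refl n w) (\<lambda>k. refl n w k j) i"
    unfolding rmv_def refl_def by (intro sum.cong refl) (auto simp: mult_ac)
  also have "\<dots> = refl n w i j - 2 * w i * (\<Sum>k<n. w k * refl n w k j) / S"
    using i by (simp add: refl_apply S_def)
  also have "(\<Sum>k<n. w k * refl n w k j) = w j - 2 * w j * S / S"
  proof -
    have "(\<Sum>k<n. w k * refl n w k j) = (\<Sum>k<n. w k * (if k = j then 1 else 0)) - (\<Sum>k<n. 2 * w j * (w k)^2 / S)"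
      unfolding refl_def S_def[symmetric] by (simp only: right_diff_distrib sum_subtractf) (simp add: power2_eq_square mult_ac)
    also have "\<dots> = w j - 2 * w j * S / S"
      using j by (simp add: sum_delta_mult' sum_divide_distrib[symmetric] sum_distrib_left[symmetric] S_def)
    finally show ?thesis .
  qed
  also have "w j - 2 * w j * S / S = - w j" using S by (simp add: S_def)
  finally show "(\<Sum>k<n. cnj (cm (refl n w) k i) * cm (refl n w) k j) = (if i = j then 1 else 0)"
    by (simp add: refl_def S_def)
qed

lemma refl_swap:
  assumes eq: "(\<Sum>k<n. (u k)^2) = (\<Sum>k<n. (v k)^2)"
    and ne: "(\<Sum>k<n. (u k - v k)^2) \<noteq> 0" and c: "c < n"
  shows "rmv n (refl n (\<lambda>k. u k - v k)) u c = v c"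
proof -
  define a where "a = (\<Sum>k<n. u k * v k)"
  define U where "U = (\<Sum>k<n. (u k)^2)"
  have num: "(\<Sum>k<n. (u k - v k) * u k) = U - a"
    by (simp add: U_def a_def left_diff_distrib sum_subtractf power2_eq_square mult.commute right_diff_distrib)
  have den: "(\<Sum>k<n. (u k - v k)^2) = 2 * (U - a)"
    using eq by (simp add: U_def a_def power2_diff sum_subtractf sum.distrib sum_distrib_left mult_ac)
  have "U \<noteq> a" using ne den by simp
  have "rmv n (refl n (\<lambda>k. u k - v k)) u c = u c - 2 * (u c - v c) * (U - a) / (2 * (U - a))"
    using c by (simp add: refl_apply num den)
  also have "\<dots> = v c" using \<open>U \<noteq> a\<close> by (simp add: field_simps)
  finally show ?thesis .
qed

definition idm :: "nat \<Rightarrow> nat \<Rightarrow> real" where "idm = (\<lambda>i j. if i = j then 1 else 0)"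

lemma unitary_idm: "unitary_on n (cm idm)"
  unfolding unitary_on_def
proof (intro allI impI)
  fix i j assume "i < n" "j < n"
  have "\<And>k. cnj (cm idm k i) * cm idm k j = (if k = i then (if i = j then 1 else 0) else 0)"
    by (simp add: cm_def idm_def)
  then show "(\<Sum>k<n. cnj (cm idm k i) * cm idm k j) = (if i = j then 1 else 0)"
    using \<open>i < n\<close> by simp
qed

lemma rmv_idm: "c < n \<Longrightarrow> rmv n idm v c = v c"
  unfolding rmv_def idm_def by (rule sum_delta_mult)

definition bd :: "nat \<Rightarrow> (nat \<Rightarrow> nat \<Rightarrow> real) \<Rightarrow> nat \<Rightarrow> nat \<Rightarrow> real" where
  "bd B R = (\<lambda>c c'. if c div B = c' div B then R (c mod B) (c' mod B) else 0)"

lemma sum_block: "(\<Sum>k<Np * B. h k) = (\<Sum>i<Np. \<Sum>y<(B::nat). h (i * B + y))"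
  by (subst sum_mult_product) (simp add: add.commute)

lemma rmv_bd:
  assumes "c < Np * B"
  shows "rmv (Np * B) (bd B R) v c = (\<Sum>y<B. R (c mod B) y * v ((c div B) * B + y))"
proof -
  have B: "B > 0" using assms by (cases B) auto
  have cd: "c div B < Np" using assms B by (simp add: div_less_iff_less_mult)
  have "rmv (Np * B) (bd B R) v c = (\<Sum>i<Np. \<Sum>y<B. bd B R c (i * B + y) * v (i * B + y))"
    unfolding rmv_def by (rule sum_block)
  also have "\<dots> = (\<Sum>i<Np. if i = c div B then (\<Sum>y<B. R (c mod B) y * v (i * B + y)) else 0)"
    unfolding bd_def using B by (intro sum.cong refl) auto
  also have "\<dots> = (\<Sum>y<B. R (c mod B) y * v ((c div B) * B + y))" using cd by simp
  finally show ?thesis .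
qed

lemma unitary_bd:
  assumes U: "unitary_on B (cm R)" and B: "B > 0"
  shows "unitary_on (Np * B) (cm (bd B R))"
  unfolding unitary_on_def
proof (intro allI impI)
  fix a b assume a: "a < Np * B" and b: "b < Np * B"
  have ad: "a div B < Np" using a B by (simp add: div_less_iff_less_mult)
  have "(\<Sum>k<Np * B. cnj (cm (bd B R) k a) * cm (bd B R) k b)
     = (\<Sum>i<Np. \<Sum>y<B. cnj (cm (bd B R) (i * B + y) a) * cm (bd B R) (i * B + y) b)"
    by (rule sum_block)
  also have "\<dots> = (\<Sum>i<Np. if i = a div B \<and> i = b div B then
        (\<Sum>y<B. cnj (cm R y (a mod B)) * cm R y (b mod B)) else 0)"
  proof (intro sum.cong refl)
    fix i assume "i \<in> {..<Np}"
    show "(\<Sum>y<B. cnj (cm (bd B R) (i * B + y) a) * cm (bd B R) (i * B + y) b) = (if i = a div B \<and> i = b div B then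
        (\<Sum>y<B. cnj (cm R y (a mod B)) * cm R y (b mod B)) else 0)"
    proof (cases "i = a div B \<and> i = b div B")
      case True
      have "\<And>y. y < B \<Longrightarrow> (i * B + y) div B = i \<and> (i * B + y) mod B = y" using B by simp
      then have "(\<Sum>y<B. cnj (cm (bd B R) (i * B + y) a) * cm (bd B R) (i * B + y) b) =
          (\<Sum>y<B. cnj (cm R y (a mod B)) * cm R y (b mod B))"
        using True by (intro sum.cong refl) (auto simp: bd_def cm_def)
      then show ?thesis using True by simp
    next
      case False
      have "\<And>y. y < B \<Longrightarrow> (i * B + y) div B = i" using B by simp
      then have "\<And>y. y < B \<Longrightarrow> cnj (cm (bd B R) (i * B + y) a) * cm (bd B R) (i * B + y) b = 0"
        using False by (auto simp: bd_def cm_def)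
      then have "(\<Sum>y<B. cnj (cm (bd B R) (i * B + y) a) * cm (bd B R) (i * B + y) b) = 0"
        by (intro sum.neutral) auto
      then show ?thesis using False by (simp only: if_False)
    qed
  qed
  also have "\<dots> = (if a div B = b div B then (\<Sum>y<B. cnj (cm R y (a mod B)) * cm R y (b mod B)) else 0)"
  proof (cases "a div B = b div B")
    case True then show ?thesis using ad by (simp add: sum.delta')
  next
    case False
    then show ?thesis by (simp, intro sum.neutral) auto
  qed
  also have "\<dots> = (if a = b then 1 else 0)"
  proof -
    have "a div B = b div B \<and> a mod B = b mod B \<longleftrightarrow> a = b"
      by (metis div_mult_mod_eq)
    then show ?thesis using U B unfolding unitary_on_def by auto
  qed
  finally show "(\<Sum>k<Np * B. cnj (cm (bd B R) k a) * cm (bd B R) k b) = (if a = b then 1 else 0)" .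
qed

lemma modarith: fixes x y t B :: nat assumes "x < B" "y < B" "t < B"
  shows "(x + t) mod B = y \<longleftrightarrow> x = (y + B - t) mod B"
proof
  assume h: "(x + t) mod B = y"
  have "(y + B - t) mod B = ((x + t) mod B + (B - t)) mod B" using h assms by simp
  also have "\<dots> = (x + t + (B - t)) mod B" by (simp add: mod_add_left_eq)
  also have "x + t + (B - t) = x + B" using assms by simp
  finally show "x = (y + B - t) mod B" using assms by simp
next
  assume h: "x = (y + B - t) mod B"
  have "(x + t) mod B = ((y + (B - t)) mod B + t) mod B" using h assms by simp
  also have "\<dots> = (y + (B - t) + t) mod B" by (simp add: mod_add_left_eq)
  also have "y + (B - t) + t = y + B" using assms by simp
  finally show "(x + t) mod B = y" using assms by simp
qed

lemma par_mod: fixes x t B :: nat assumes "even B" "t < B"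
  shows "even ((x + B - t) mod B) \<longleftrightarrow> even (x + t)"
  by (metis (full_types) add_diff_inverse_nat assms(1,2) dvd_mod_iff
    even_add less_imp_add_positive not_add_less2 trans_less_add1)

locale gsetup =
  fixes m1 r :: nat and bt :: "nat \<Rightarrow> nat"
  assumes r1: "1 \<le> r" and m1: "1 \<le> m1" and bt_lt: "\<And>i. bt i < 2 ^ r"
begin

definition "BB = (2::nat) ^ r"
definition "Np = (2::nat) ^ m1"
definition "dd = Np * BB"
definition "img c = (c div BB) * BB + ((c mod BB + bt (c div BB)) mod BB)"
definition "Qr = (\<lambda>c' c. if c' = img c then 1 else 0 :: real)"
definition "pre c = (c div BB) * BB + ((c mod BB + BB - bt (c div BB)) mod BB)"
definition "ph x = (-1::real) ^ x / sqrt BB"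
definition "pv a c = a (c div BB) * ph (c mod BB)"
definition "uu = 1 / sqrt Np"
definition "psi = pv (\<lambda>_. uu)"
definition "e0 (c::nat) = (if c = 0 then 1 else 0 :: real)"
definition "H = refl dd (\<lambda>c. e0 c - psi c)"
definition "Dm = refl dd psi"
definition "Rr = refl BB (\<lambda>x. ph x - e0 x)"
definition "Xm = bd BB Rr"
definition "sg i = (-1::real) ^ (bt i)"
definition "Gr a = (\<lambda>i. sg i * a i - 2 * (\<Sum>k<Np. uu * (sg k * a k)) * uu)"

abbreviation "fstep \<equiv> (\<lambda>v U. rmv dd U (rmv dd Qr v))"

lemma BB_ge2: "BB \<ge> 2"
proof -
  have "(2::nat) ^ 1 \<le> 2 ^ r" using r1 by (intro power_increasing) auto
  then show ?thesis by (simp add: BB_def)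
qed

lemma Np_ge2: "Np \<ge> 2"
proof -
  have "(2::nat) ^ 1 \<le> 2 ^ m1" using m1 by (intro power_increasing) auto
  then show ?thesis by (simp add: Np_def)
qed

lemma BB_pos: "BB > 0" using BB_ge2 by simp
lemma even_BB: "even BB" using r1 by (simp add: BB_def)
lemma dd_eq: "dd = 2 ^ (m1 + r)" by (simp add: dd_def Np_def BB_def power_add)
lemma bt_BB: "bt i < BB" using bt_lt by (simp add: BB_def)

lemma div_lt: "c < dd \<Longrightarrow> c div BB < Np"
  using BB_pos by (simp add: dd_def div_less_iff_less_mult)

lemma block_lt: "i < Np \<Longrightarrow> y < BB \<Longrightarrow> i * BB + y < dd"
proof -
  assume "i < Np" "y < BB"
  then have "i * BB + y < i * BB + BB" by simp
  also have "\<dots> = (i + 1) * BB" by simp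
  also have "\<dots> \<le> Np * BB" using \<open>i < Np\<close> by (intro mult_right_mono) auto
  finally show ?thesis by (simp add: dd_def)
qed

lemma block_div [simp]: "y < BB \<Longrightarrow> (i * BB + y) div BB = i"
  using BB_pos by simp
lemma block_mod [simp]: "y < BB \<Longrightarrow> (i * BB + y) mod BB = y"
  using BB_pos by simp

lemma pre_lt: "c < dd \<Longrightarrow> pre c < dd"
  unfolding pre_def using div_lt BB_pos by (intro block_lt) auto

lemma img_eq_iff: "k < dd \<Longrightarrow> c < dd \<Longrightarrow> img k = c \<longleftrightarrow> k = pre c"
proof -
  assume k: "k < dd" and c: "c < dd"
  define t where "t = bt (k div BB)"
  have t: "t < BB" by (simp add: t_def bt_BB)
  have xk: "k mod BB < BB" and xc: "c mod BB < BB" using BB_pos by auto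
  have imgd: "img k div BB = k div BB" and imgm: "img k mod BB = (k mod BB + t) mod BB"
    unfolding img_def t_def using BB_pos by simp_all
  have pred: "pre c div BB = c div BB" and prem: "pre c mod BB = (c mod BB + BB - bt (c div BB)) mod BB"
    unfolding pre_def using BB_pos by simp_all
  show ?thesis
  proof
    assume h: "img k = c"
    then have d: "k div BB = c div BB" using imgd by simp
    have "(k mod BB + t) mod BB = c mod BB" using h imgm by simp
    then have "k mod BB = (c mod BB + BB - t) mod BB" using modarith[OF xk xc t] by simp
    then show "k = pre c" using d pred prem t_def
      by (metis div_mult_mod_eq)
  next
    assume h: "k = pre c"
    then have d: "k div BB = c div BB" using pred by simp
    have "k mod BB = (c mod BB + BB - t) mod BB" using h prem d t_def by simp
    then have "(k mod BB + t) mod BB = c mod BB" using modarith[OF xk xc t] by simp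
    then show "img k = c" using d imgd imgm by (metis div_mult_mod_eq)
  qed
qed

lemma Q_apply: "c < dd \<Longrightarrow> rmv dd Qr v c = v (pre c)"
proof -
  assume c: "c < dd"
  have "rmv dd Qr v c = (\<Sum>k<dd. if k = pre c then v k else 0)"
  proof -
    have "\<And>k. k < dd \<Longrightarrow> (c = img k) = (k = pre c)" using img_eq_iff[OF _ c] by (metis (no_types))
    then show ?thesis unfolding rmv_def Qr_def by (intro sum.cong refl) (auto simp: pre_lt[OF c])
  qed
  also have "\<dots> = v (pre c)" using pre_lt[OF c] by simp
  finally show ?thesis .
qed

lemma Q_pv: "c < dd \<Longrightarrow> rmv dd Qr (pv a) c = pv (\<lambda>i. sg i * a i) c"
proof -
  assume c: "c < dd"
  define t where "t = bt (c div BB)"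
  have t: "t < BB" by (simp add: t_def bt_BB)
  have pred: "pre c div BB = c div BB" and prem: "pre c mod BB = (c mod BB + BB - t) mod BB"
    unfolding pre_def t_def using BB_pos by simp_all
  have "(-1::real) ^ ((c mod BB + BB - t) mod BB) = (-1) ^ (c mod BB + t)"
    using par_mod[OF even_BB t, of "c mod BB"] by (simp add: minus_one_power_iff)
  then have "ph (pre c mod BB) = sg (c div BB) * ph (c mod BB)"
    unfolding ph_def sg_def prem t_def by (simp add: power_add)
  then show ?thesis using Q_apply[OF c] by (simp add: pv_def pred)
qed

lemma sum_ph2: "(\<Sum>x<BB. (ph x)^2) = 1"
  using BB_pos by (simp add: ph_def power_divide power_mult_distrib flip: power_mult)
    
lemma sum_dd: "(\<Sum>c<dd. h c) = (\<Sum>i<Np. \<Sum>y<BB. h (i * BB + y))"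
  unfolding dd_def by (rule sum_block)

lemma sum_pv: "(\<Sum>c<dd. pv a c * pv b c) = (\<Sum>i<Np. a i * b i)"
proof -
  have "(\<Sum>c<dd. pv a c * pv b c) = (\<Sum>i<Np. \<Sum>y<BB. a i * b i * (ph y)^2)"
    unfolding sum_dd pv_def by (intro sum.cong refl) (simp add: power2_eq_square mult_ac)
  also have "\<dots> = (\<Sum>i<Np. a i * b i)"
    by (simp add: sum_distrib_left[symmetric] sum_ph2)
  finally show ?thesis .
qed

lemma uu_sq: "Np * uu^2 = 1"
  using Np_ge2 by (simp add: uu_def power_divide)

lemma psi_norm: "(\<Sum>c<dd. (psi c)^2) = 1"
  using sum_pv[of "\<lambda>_. uu" "\<lambda>_. uu"] uu_sq unfolding psi_def by (simp add: power2_eq_square)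

lemma D_pv: "c < dd \<Longrightarrow> rmv dd Dm (pv a) c = pv (\<lambda>i. a i - 2 * (\<Sum>k<Np. uu * a k) * uu) c"
proof -
  assume c: "c < dd"
  have ip: "(\<Sum>k<dd. psi k * pv a k) = (\<Sum>k<Np. uu * a k)"
    unfolding psi_def by (rule sum_pv)
  show ?thesis
    unfolding Dm_def using c by (simp add: refl_apply ip psi_norm) (simp add: pv_def psi_def algebra_simps)
qed

lemma step_pv: "c < dd \<Longrightarrow> fstep (pv a) Dm c = pv (Gr a) c"
proof -
  assume c: "c < dd"
  have "rmv dd Dm (rmv dd Qr (pv a)) = rmv dd Dm (pv (\<lambda>i. sg i * a i))"
    by (rule rmv_cong) (simp add: Q_pv)
  then show ?thesis using D_pv[OF c] by (simp add: Gr_def)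
qed

lemma iter_pv: "c < dd \<Longrightarrow> foldl fstep (pv a) (replicate t Dm) c = pv ((Gr ^^ t) a) c"
proof (induction t arbitrary: a c)
  case 0 then show ?case by simp
next
  case (Suc t)
  have "foldl fstep (pv a) (replicate (Suc t) Dm) c = foldl fstep (fstep (pv a) Dm) (replicate t Dm) c"
    by (simp add: replicate_Suc)
  also have "\<dots> = foldl fstep (pv (Gr a)) (replicate t Dm) c"
    by (rule foldl_rmv_cong) (use step_pv Suc.prems in auto)
  also have "\<dots> = pv ((Gr ^^ t) (Gr a)) c" using Suc by simp
  also have "(Gr ^^ t) (Gr a) = (Gr ^^ Suc t) a" by (simp only: funpow_Suc_right comp_def)
  finally show ?case .
qed

lemma e0_norm: "(\<Sum>x<n. (e0 x)^2) = 1" if "n > 0"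
proof -
  have "\<And>x. (e0 x)^2 = (if x = 0 then 1 else 0)" by (simp add: e0_def)
  then show ?thesis using that by simp
qed

lemma ph_ne_e0: "(\<Sum>x<BB. (ph x - e0 x)^2) \<noteq> 0"
proof
  assume h: "(\<Sum>x<BB. (ph x - e0 x)^2) = 0"
  have "1 \<in> {..<BB}" using BB_ge2 by simp
  have "\<forall>x\<in>{..<BB}. (ph x - e0 x)^2 = 0" using h by (subst (asm) sum_nonneg_eq_0_iff) auto
  then have "(ph 1 - e0 1)^2 = 0" using \<open>1 \<in> {..<BB}\<close> by blast
  then show False using BB_pos by (simp add: ph_def e0_def)
qed

lemma Rr_ph: "x < BB \<Longrightarrow> rmv BB Rr ph x = e0 x"
  unfolding Rr_def by (rule refl_swap) (use sum_ph2 e0_norm[OF BB_pos] ph_ne_e0 in auto)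

lemma X_pv: "c < dd \<Longrightarrow> rmv dd Xm (pv a) c = a (c div BB) * e0 (c mod BB)"
proof -
  assume c: "c < dd"
  have "rmv dd Xm (pv a) c = (\<Sum>y<BB. Rr (c mod BB) y * pv a ((c div BB) * BB + y))"
    unfolding Xm_def dd_def by (rule rmv_bd) (use c dd_def in simp)
  also have "\<dots> = a (c div BB) * rmv BB Rr ph (c mod BB)"
    unfolding rmv_def pv_def by (simp add: sum_distrib_left mult_ac)
  also have "\<dots> = a (c div BB) * e0 (c mod BB)" using Rr_ph BB_pos by simp
  finally show ?thesis .
qed

lemma Q_e: "c < dd \<Longrightarrow> rmv dd Qr (\<lambda>c. a (c div BB) * e0 (c mod BB)) c
   = a (c div BB) * (if c mod BB = bt (c div BB) then 1 else 0)"
proof -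
  assume c: "c < dd"
  define t where "t = bt (c div BB)"
  have t: "t < BB" by (simp add: t_def bt_BB)
  have xc: "c mod BB < BB" using BB_pos by simp
  have pred: "pre c div BB = c div BB" and prem: "pre c mod BB = (c mod BB + BB - t) mod BB"
    unfolding pre_def t_def using BB_pos by simp_all
  have "(c mod BB + BB - t) mod BB = 0 \<longleftrightarrow> c mod BB = t"
    using modarith[of 0 BB "c mod BB" t] t xc BB_pos by auto
  then show ?thesis using Q_apply[OF c] by (simp add: pred prem e0_def t_def)
qed

lemma H_col: "c < dd \<Longrightarrow> H c 0 = psi c"
proof -
  assume c: "c < dd"
  have d0: "0 < dd" using c by simp
  have "rmv dd H e0 c = H c 0"
    unfolding rmv_def e0_def using d0 by (rule sum_delta_mult')
  moreover have "rmv dd H e0 c = psi c"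
    unfolding H_def
  proof (rule refl_swap[OF _ _ c])
    show "(\<Sum>k<dd. (e0 k)^2) = (\<Sum>k<dd. (psi k)^2)" using e0_norm[OF d0] psi_norm by simp
    show "(\<Sum>k<dd. (e0 k - psi k)^2) \<noteq> 0"
    proof
      assume h: "(\<Sum>k<dd. (e0 k - psi k)^2) = 0"
      have "2 * 2 \<le> Np * BB" by (rule mult_le_mono[OF Np_ge2 BB_ge2])
      then have "1 < dd" unfolding dd_def by simp
      have "\<forall>x\<in>{..<dd}. (e0 x - psi x)^2 = 0" using h by (subst (asm) sum_nonneg_eq_0_iff) auto
      then have "(e0 1 - psi 1)^2 = 0" using \<open>1 < dd\<close> by blast
      moreover have "psi 1 \<noteq> 0"
        using BB_ge2 Np_ge2 by (simp add: psi_def pv_def ph_def uu_def)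
      ultimately show False by (simp add: e0_def)
    qed
  qed
  ultimately show ?thesis by simp
qed

definition "stageR t = [H] @ replicate t Dm @ [Xm, idm]"

lemma stage_final:
  assumes c: "c < dd"
  shows "foldl fstep (\<lambda>k. H k 0) (replicate t Dm @ [Xm, idm]) c
       = sg (c div BB) * (Gr ^^ t) (\<lambda>_. uu) (c div BB) * (if c mod BB = bt (c div BB) then 1 else 0)"
proof -
  define a where "a = (Gr ^^ t) (\<lambda>_. uu)"
  define v where "v = foldl fstep (\<lambda>k. H k 0) (replicate t Dm)"
  have v: "k < dd \<Longrightarrow> v k = pv a k" for k
  proof -
    assume k: "k < dd"
    have "v k = foldl fstep psi (replicate t Dm) k"
      unfolding v_def by (rule foldl_rmv_cong) (use H_col k in auto)
    also have "\<dots> = pv a k" unfolding psi_def a_def by (rule iter_pv[OF k])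
    finally show ?thesis .
  qed
  have w: "k < dd \<Longrightarrow> fstep v Xm k = (\<lambda>c. sg (c div BB) * a (c div BB) * e0 (c mod BB)) k" for k
  proof -
    assume k: "k < dd"
    have "rmv dd Qr v = rmv dd Qr (pv a)" by (rule rmv_cong) (use v in auto)
    moreover have "rmv dd Xm (rmv dd Qr (pv a)) = rmv dd Xm (pv (\<lambda>i. sg i * a i))"
      by (rule rmv_cong) (use Q_pv in auto)
    ultimately show ?thesis using X_pv[OF k] by simp
  qed
  have "foldl fstep (\<lambda>k. H k 0) (replicate t Dm @ [Xm, idm]) c = fstep (fstep v Xm) idm c"
    by (simp add: v_def)
  also have "\<dots> = rmv dd Qr (fstep v Xm) c" using c by (simp add: rmv_idm)
  also have "\<dots> = rmv dd Qr (\<lambda>c. (\<lambda>i. sg i * a i) (c div BB) * e0 (c mod BB)) c"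
    by (rule arg_cong[where f="\<lambda>f. f c"], rule rmv_cong) (use w in \<open>auto simp: mult.assoc\<close>)
  also have "\<dots> = (\<lambda>i. sg i * a i) (c div BB) * (if c mod BB = bt (c div BB) then 1 else 0)"
    by (rule Q_e[OF c])
  finally show ?thesis by (simp add: a_def)
qed

end

lemma sin_step: "sin ((a::real) + 2 * th) = sin a + 2 * sin th * cos (a + th)"
proof -
  define b where "b = a + th"
  have 1: "a + 2 * th = b + th" and 2: "a = b - th" by (simp_all add: b_def)
  show ?thesis unfolding 1 unfolding 2 by (simp add: sin_add sin_diff algebra_simps)
qed

lemma cos_step: "cos ((a::real) + 2 * th) = - cos a + 2 * cos th * cos (a + th)"
proof -
  define b where "b = a + th"
  have 1: "a + 2 * th = b + th" and 2: "a = b - th" by (simp_all add: b_def)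
  show ?thesis unfolding 1 unfolding 2 by (simp add: cos_add cos_diff algebra_simps)
qed

context gsetup
begin

definition "Mk = {i. i < Np \<and> odd (bt i)}"
definition "KK = card Mk"
definition "vc A Bc = (\<lambda>i. if i < Np \<and> odd (bt i) then A / sqrt KK else Bc / sqrt (Np - KK))"
definition "ss = uu * sqrt KK"
definition "cc = uu * sqrt (Np - KK)"
definition "th = arcsin ss"

lemma Mk_sub: "Mk \<subseteq> {..<Np}" by (auto simp: Mk_def)
lemma Mk_fin: "finite Mk" using Mk_sub finite_subset by blast
lemma KK_le: "KK \<le> Np" unfolding KK_def using card_mono[OF _ Mk_sub] by simp

lemma sum_sg_vc:
  "(\<Sum>k<Np. uu * (sg k * vc A Bc k)) = - A * ss + Bc * cc"
proof -
  have split: "{..<Np} = Mk \<union> ({..<Np} - Mk)" using Mk_sub by auto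
  have "(\<Sum>k<Np. uu * (sg k * vc A Bc k)) = (\<Sum>k\<in>Mk. uu * (sg k * vc A Bc k)) + (\<Sum>k\<in>{..<Np} - Mk. uu * (sg k * vc A Bc k))"
    by (subst split, rule sum.union_disjoint) (use Mk_fin in auto)
  also have "(\<Sum>k\<in>Mk. uu * (sg k * vc A Bc k)) = (\<Sum>k\<in>Mk. - (uu * A / sqrt KK))"
    by (intro sum.cong refl) (auto simp: Mk_def sg_def vc_def)
  also have "(\<Sum>k\<in>{..<Np} - Mk. uu * (sg k * vc A Bc k)) = (\<Sum>k\<in>{..<Np} - Mk. uu * Bc / sqrt (Np - KK))"
    by (intro sum.cong refl) (auto simp: Mk_def sg_def vc_def)
  moreover have "card ({..<Np} - Mk) = Np - KK" using Mk_sub Mk_fin by (simp add: card_Diff_subset KK_def)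
  ultimately have "(\<Sum>k<Np. uu * (sg k * vc A Bc k)) = - (real KK * (uu * A / sqrt KK)) + real (Np - KK) * (uu * Bc / sqrt (Np - KK))"
    by (simp add: KK_def)
  also have "real KK * (uu * A / sqrt KK) = A * ss"
    by (cases "KK = 0") (simp_all add: ss_def real_div_sqrt field_simps)
  also have "real (Np - KK) * (uu * Bc / sqrt (Np - KK)) = Bc * cc"
    by (cases "Np - KK = 0") (simp_all add: cc_def field_simps real_div_sqrt del: of_nat_diff)
  finally show ?thesis by simp
qed

lemma Gr_vc:
  assumes K: "0 < KK" "KK < Np" and i: "i < Np"
  shows "Gr (vc A Bc) i = vc (- A - 2 * ss * (- A * ss + Bc * cc)) (Bc - 2 * cc * (- A * ss + Bc * cc)) i"
proof -
  have u1: "uu = ss / sqrt KK" using K by (simp add: ss_def)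
  have u2: "uu = cc / sqrt (Np - KK)" using K by (simp add: cc_def)
  show ?thesis
  proof (cases "odd (bt i)")
    case True
    have l: "Gr (vc A Bc) i = - (A / sqrt KK) - 2 * (- A * ss + Bc * cc) * (ss / sqrt KK)"
      unfolding Gr_def sum_sg_vc using i True by (simp add: vc_def sg_def u1[symmetric])
    show ?thesis unfolding l using i True by (simp add: vc_def diff_divide_distrib)
  next
    case False
    have l: "Gr (vc A Bc) i = Bc / sqrt (Np - KK) - 2 * (- A * ss + Bc * cc) * (cc / sqrt (Np - KK))"
      unfolding Gr_def sum_sg_vc using i False by (simp add: vc_def sg_def u2[symmetric])
    show ?thesis unfolding l using i False by (simp add: vc_def diff_divide_distrib)
  qed
qed

lemma ss_cc: assumes "KK \<le> Np" shows "ss^2 + cc^2 = 1" "0 \<le> ss" "0 \<le> cc" "ss \<le> 1"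
proof -
  have a: "ss^2 = uu^2 * KK" unfolding ss_def by (simp add: power_mult_distrib)
  have b: "cc^2 = uu^2 * (real Np - KK)" unfolding cc_def using assms by (simp add: power_mult_distrib of_nat_diff)
  show sc: "ss^2 + cc^2 = 1" unfolding a b using uu_sq by (simp add: algebra_simps)
  show "0 \<le> ss" "0 \<le> cc" using Np_ge2 by (simp_all add: ss_def cc_def uu_def)
  have h1: "ss^2 \<le> 1^2" using sc zero_le_power2[of cc] by (simp only: one_power2)
  show "ss \<le> 1" using power2_le_imp_le[OF h1] by simp
qed

lemma sin_th: "sin th = ss" and cos_th: "cos th = cc"
proof -
  note h = ss_cc[OF KK_le]
  show "sin th = ss" unfolding th_def using h by (simp add: sin_arcsin)
  have "cos th = sqrt (1 - ss^2)" unfolding th_def using h by (simp add: cos_arcsin)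
  also have "1 - ss^2 = cc^2" using h by simp
  finally show "cos th = cc" using h by simp
qed

lemma Gr_cong: "(\<And>k. k < Np \<Longrightarrow> a k = b k) \<Longrightarrow> i < Np \<Longrightarrow> Gr a i = Gr b i"
proof -
  assume h: "\<And>k. k < Np \<Longrightarrow> a k = b k" and i: "i < Np"
  have "(\<Sum>k<Np. uu * (sg k * a k)) = (\<Sum>k<Np. uu * (sg k * b k))" using h by simp
  then show ?thesis unfolding Gr_def using h i by simp
qed

lemma grover_iter:
  assumes K: "0 < KK" "KK < Np"
  shows "i < Np \<Longrightarrow> (Gr ^^ t) (\<lambda>_. uu) i
     = vc ((-1)^t * sin ((2 * t + 1) * th)) ((-1)^t * cos ((2 * t + 1) * th)) i"
proof (induction t arbitrary: i)
  case 0
  have u1: "uu = ss / sqrt KK" using K by (simp add: ss_def)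
  have u2: "uu = cc / sqrt (Np - KK)" using K by (simp add: cc_def)
  show ?case using u1 u2 by (simp add: vc_def sin_th cos_th)
next
  case (Suc t)
  define e :: real where "e = (-1)^t"
  define al where "al = (2 * real t + 1) * th"
  have "(Gr ^^ Suc t) (\<lambda>_. uu) i = Gr ((Gr ^^ t) (\<lambda>_. uu)) i" by simp
  also have "\<dots> = Gr (vc (e * sin al) (e * cos al)) i"
    by (rule Gr_cong) (use Suc in \<open>simp_all only: e_def al_def\<close>)
  also have "\<dots> = vc (- (e * sin al) - 2 * ss * (- (e * sin al) * ss + e * cos al * cc))
        (e * cos al - 2 * cc * (- (e * sin al) * ss + e * cos al * cc)) i"
    by (rule Gr_vc[OF K Suc.prems])
  also have "- (e * sin al) * ss + e * cos al * cc = e * cos (al + th)"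
    by (simp add: cos_add sin_th cos_th algebra_simps)
  also have "- (e * sin al) - 2 * ss * (e * cos (al + th)) = (-1)^Suc t * sin ((2 * real (Suc t) + 1) * th)"
  proof -
    have eq: "(2 * real (Suc t) + 1) * th = al + 2 * th" by (simp add: al_def algebra_simps)
    show ?thesis unfolding eq sin_step sin_th e_def by (simp add: algebra_simps)
  qed
  also have "e * cos al - 2 * cc * (e * cos (al + th)) = (-1)^Suc t * cos ((2 * real (Suc t) + 1) * th)"
  proof -
    have eq: "(2 * real (Suc t) + 1) * th = al + 2 * th" by (simp add: al_def algebra_simps)
    show ?thesis unfolding eq cos_step cos_th e_def by (simp add: algebra_simps)
  qed
  finally show ?case .
qed

lemma grover_marked:
  assumes K: "0 < KK" "KK < Np" and i: "i < Np" "odd (bt i)"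
  shows "((Gr ^^ t) (\<lambda>_. uu) i)^2 = (sin ((2 * t + 1) * th))^2 / KK"
  using grover_iter[OF K i(1), of t] i by (simp add: vc_def power_mult_distrib power_divide flip: power_mult)

end

lemma x_le_2sin: assumes "0 \<le> x" "x \<le> pi / 3" shows "x \<le> 2 * sin x"
proof -
  let ?f = "\<lambda>x. 2 * sin x - x"
  have "\<And>u. \<lbrakk>0 \<le> u; u \<le> x\<rbrakk> \<Longrightarrow> (?f has_real_derivative 2 * cos u - 1) (at u)"
    by (auto intro!: derivative_eq_intros)
  moreover have "\<And>u. \<lbrakk>0 \<le> u; u \<le> x\<rbrakk> \<Longrightarrow> 0 \<le> 2 * cos u - 1"
  proof -
    fix u assume "0 \<le> u" "u \<le> x"
    then have "cos (pi / 3) \<le> cos u" using assms by (intro cos_monotone_0_pi_le) auto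
    then show "0 \<le> 2 * cos u - 1" by (simp add: cos_60)
  qed
  ultimately have "?f 0 \<le> ?f x"
    by (intro DERIV_nonneg_imp_nondecreasing[OF assms(1)]) blast
  then show ?thesis by simp
qed

definition q0 :: real where "q0 = (sin (1/8))^2"

lemma q0_pos: "0 < q0" and q0_le1: "q0 \<le> 1"
proof -
  have "0 < sin (1/8::real)" using pi_gt3 by (intro sin_gt_zero) auto
  then show "0 < q0" by (simp add: q0_def)
  show "q0 \<le> 1" by (simp add: q0_def abs_square_le_1)
qed

lemma sin_ge_sin8:
  fixes x :: real
  assumes "1/8 \<le> x" "x \<le> 9/4"
  shows "sin (1/8) \<le> sin x"
proof (cases "x \<le> pi/2")
  case True
  then show ?thesis using assms pi_gt3 by (intro sin_monotone_2pi_le) auto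
next
  case False
  have "sin (1/8) \<le> sin (pi - x)" using assms False pi_gt3 by (intro sin_monotone_2pi_le) auto
  then show ?thesis by simp
qed

lemma sin_lower:
  fixes s sa :: real
  assumes sa: "0 < sa" "sa \<le> s" and s2: "s^2 < 2 * sa^2" and sh: "s^2 \<le> 1/2"
  shows "q0 \<le> (sin ((2 * real (nat \<lfloor>1 / (8 * sa)\<rfloor>) + 1) * arcsin s))^2"
proof -
  define T where "T = nat \<lfloor>1 / (8 * sa)\<rfloor>"
  define y where "y = 1 / (8 * sa)"
  define th where "th = arcsin s"
  have y0: "0 < y" using sa by (simp add: y_def)
  have Ty: "real T \<le> y" using y0 by (simp add: T_def y_def)
  have Ty2: "y - 1 < real T" using y0 by (simp add: T_def y_def)
  have s0: "0 \<le> s" using sa by simp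
  have s34: "s < 3/4"
  proof -
    have "s^2 < (3/4)^2" using sh by (simp add: power2_eq_square)
    then show ?thesis by (rule power2_less_imp_less) simp
  qed
  have ssa: "s < 3/2 * sa"
  proof -
    have "0 < sa * sa" using sa by simp
    then have "s^2 < (3/2 * sa)^2" using s2 by (simp add: power2_eq_square)
    from power2_less_imp_less[OF this] show ?thesis using sa by simp
  qed
  have s1: "s \<le> 1" using s34 by simp
  have sinth: "sin th = s" unfolding th_def using s0 s1 by simp
  have th0: "0 \<le> th" unfolding th_def using le_arcsin_iff[of s 0] s0 s1 pi_gt_zero by simp
  have thpi: "th \<le> pi / 3"
  proof -
    have "s \<le> sin (pi / 3)"
    proof -
      have "(3/2::real)^2 \<le> (sqrt 3)^2" by (simp add: power2_eq_square)
      then have "3/2 \<le> sqrt (3::real)" by (rule power2_le_imp_le) simp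
      then show ?thesis using s34 by (simp add: sin_60)
    qed
    then show ?thesis unfolding th_def using s0 s1 pi_gt3 by (subst arcsin_le_iff) auto
  qed
  have th_ge: "s \<le> th" using sin_x_le_x[OF th0] sinth by simp
  have th_le: "th \<le> 2 * s" using x_le_2sin[OF th0 thpi] sinth by simp
  define x where "x = (2 * real T + 1) * th"
  have xu: "x \<le> 9/4"
  proof -
    have "x \<le> (2 * y + 1) * (2 * s)" unfolding x_def using Ty th_le th0
      by (intro mult_mono) auto
    also have "\<dots> = s / (2 * sa) + 2 * s" using sa by (simp add: y_def field_simps)
    also have "s / (2 * sa) \<le> 3/4" using ssa sa by (simp add: field_simps)
    finally show ?thesis using s34 by simp
  qed
  have xl: "1/8 \<le> x"
  proof (cases "1 \<le> y")
    case True
    have "1/4 - sa = (2 * (y - 1) + 1) * sa" using sa by (simp add: y_def field_simps)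
    also have "\<dots> \<le> (2 * real T + 1) * th"
    proof (rule mult_mono)
      show "2 * (y - 1) + 1 \<le> 2 * real T + 1" using Ty2 by simp
      show "sa \<le> th" using sa th_ge by simp
      show "0 \<le> 2 * real T + 1" by simp
      show "0 \<le> sa" using sa by simp
    qed
    finally have "1/4 - sa \<le> x" by (simp add: x_def)
    moreover have "sa \<le> 1/8" using True sa by (simp add: y_def field_simps)
    ultimately show ?thesis by simp
  next
    case False
    then have "1/8 < sa" using sa by (simp add: y_def field_simps)
    moreover have "th \<le> x" unfolding x_def using th0 by (simp add: mult_le_cancel_right1)
    ultimately show ?thesis using th_ge sa by simp
  qed
  have "sin (1/8) \<le> sin x" by (rule sin_ge_sin8[OF xl xu])
  moreover have "0 \<le> sin (1/8::real)" using pi_gt3 by (intro sin_ge_zero) auto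
  ultimately have "(sin (1/8))^2 \<le> (sin x)^2" by (intro power_mono) auto
  then show ?thesis by (simp add: q0_def x_def T_def th_def)
qed

context gsetup
begin

lemma e0_psi_ne: "(\<Sum>k<dd. (e0 k - psi k)^2) \<noteq> 0"
proof
  assume h: "(\<Sum>k<dd. (e0 k - psi k)^2) = 0"
  have "2 * 2 \<le> Np * BB" by (rule mult_le_mono[OF Np_ge2 BB_ge2])
  then have "1 < dd" unfolding dd_def by simp
  have "\<forall>x\<in>{..<dd}. (e0 x - psi x)^2 = 0" using h by (subst (asm) sum_nonneg_eq_0_iff) auto
  then have "(e0 1 - psi 1)^2 = 0" using \<open>1 < dd\<close> by blast
  moreover have "psi 1 \<noteq> 0"
    using BB_ge2 Np_ge2 by (simp add: psi_def pv_def ph_def uu_def)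
  ultimately show False by (simp add: e0_def)
qed

lemma unitary_H: "unitary_on dd (cm H)"
  unfolding H_def by (rule unitary_refl[OF e0_psi_ne])

lemma unitary_Dm: "unitary_on dd (cm Dm)"
  unfolding Dm_def by (rule unitary_refl) (simp add: psi_norm)

lemma unitary_Xm: "unitary_on dd (cm Xm)"
  unfolding Xm_def dd_def
  by (rule unitary_bd[OF _ BB_pos]) (unfold Rr_def, rule unitary_refl[OF ph_ne_e0])

lemma unitary_stage: "\<forall>U\<in>set (map cm (stageR t)). unitary_on dd U"
  by (auto simp: stageR_def unitary_H unitary_Dm unitary_Xm unitary_idm)

lemma query_op_Qr:
  assumes "\<And>c. query_image Q f c = img c"
  shows "query_op Q f = cm Qr"
  unfolding query_op_def cm_def Qr_def assms by (intro ext) simp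

lemma nm_run_stage:
  assumes q: "nm_query B = Q" and u: "nm_U B = map cm (stageR t)" and m: "qm Q = m1 + r"
    and qi: "\<And>c. query_image Q f c = img c" and c: "c < dd"
  shows "nm_run B f c 0 = complex_of_real (sg (c div BB) * (Gr ^^ t) (\<lambda>_. uu) (c div BB)
      * (if c mod BB = bt (c div BB) then 1 else 0))"
proof -
  have d: "2 ^ qm Q = dd" using m by (simp add: dd_eq)
  have "nm_run B f c 0 = foldl (\<lambda>v U. mv dd U (mv dd (cm Qr) v)) (\<lambda>k. cm H k 0)
      (map cm (replicate t Dm @ [Xm, idm])) c"
    unfolding nm_run_def q d query_op_Qr[OF qi] u run_ops_col by (simp add: stageR_def)
  also have "(\<lambda>k. cm H k 0) = (\<lambda>k. complex_of_real (H k 0))" by (simp add: cm_def)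
  also note foldl_cm
  finally show ?thesis using stage_final[OF c] by simp
qed

end

lemma prod_list_nth: "(\<Prod>l<length xs. h (xs ! l)) = prod_list (map h xs)"
proof (induction xs)
  case Nil then show ?case by simp
next
  case (Cons x xs)
  have "(\<Prod>l<length (x # xs). h ((x # xs) ! l)) = h x * (\<Prod>l<length xs. h (xs ! l))"
    unfolding length_Cons prod.lessThan_Suc_shift by simp
  then show ?case using Cons by simp
qed

lemma sum_list_nth: "(\<Sum>l<length xs. h (xs ! l)) = sum_list (map h xs)"
proof (induction xs)
  case Nil then show ?case by simp
next
  case (Cons x xs)
  have "(\<Sum>l<length (x # xs). h ((x # xs) ! l)) = h x + (\<Sum>l<length xs. h (xs ! l))"
    unfolding length_Cons sum.lessThan_Suc_shift by simp
  then show ?case using Cons by simp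
qed

lemma prod_list_01: "(\<And>x. 0 \<le> h x \<and> h x \<le> (1::real)) \<Longrightarrow> 0 \<le> prod_list (map h xs) \<and> prod_list (map h xs) \<le> 1"
proof (induction xs)
  case Nil then show ?case by simp
next
  case (Cons x xs)
  then show ?case by (simp add: mult_le_one)
qed

lemma prod_list_rep: "prod_list (map h (replicate k a)) = h a ^ k"
  by (induction k) auto

lemma sum_list_rep: "sum_list (map h (replicate k a)) = k * h a"
  by (induction k) auto

lemma prod_rep_bound:
  assumes h: "\<And>x. 0 \<le> h x \<and> h x \<le> (1::real)"
  shows "j0 < n \<Longrightarrow> prod_list (map h (concat (map (\<lambda>j. replicate (Lg j) (st j)) [0..<n]))) \<le> h (st j0) ^ Lg j0"
proof (induction n)
  case 0 then show ?case by simp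
next
  case (Suc n)
  define A where "A = prod_list (map h (concat (map (\<lambda>j. replicate (Lg j) (st j)) [0..<n])))"
  have eq: "prod_list (map h (concat (map (\<lambda>j. replicate (Lg j) (st j)) [0..<Suc n]))) = A * h (st n) ^ Lg n"
    by (simp add: A_def prod_list_rep)
  have A01: "0 \<le> A \<and> A \<le> 1" unfolding A_def by (rule prod_list_01[OF h])
  have B01: "0 \<le> h (st n) ^ Lg n \<and> h (st n) ^ Lg n \<le> 1" using h by (simp add: power_le_one)
  show ?case
  proof (cases "j0 < n")
    case True
    then have "A \<le> h (st j0) ^ Lg j0" using Suc by (simp add: A_def)
    then show ?thesis unfolding eq using A01 B01 by (meson mult_le_one order_trans mult_right_le_one_le)
  next
    case False
    then have "j0 = n" using Suc by simp
    then show ?thesis unfolding eq using A01 B01 by (simp add: mult_left_le_one_le)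
  qed
qed

lemma sum_rep: "sum_list (map g (concat (map (\<lambda>j. replicate (Lg j) (st j)) [0..<n]))) = (\<Sum>j<n. Lg j * g (st j))"
  by (induction n) (simp_all add: sum_list_replicate)

lemma ball_sum:
  assumes p: "1 \<le> p" and N: "1 \<le> N" and f: "f \<in> unit_ball_Lp p N"
  shows "(\<Sum>i<N. \<bar>f i\<bar> powr p) \<le> real N"
proof -
  define X where "X = (1 / real N) * (\<Sum>i<N. \<bar>f i\<bar> powr p)"
  have X0: "0 \<le> X" by (simp add: X_def sum_nonneg)
  have "X powr (1 / p) \<le> 1" using f by (simp add: unit_ball_Lp_def Lp_norm_def X_def)
  then have "X \<le> 1"
  proof -
    assume h: "X powr (1 / p) \<le> 1"
    show "X \<le> 1"
    proof (rule ccontr)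
      assume "\<not> X \<le> 1"
      then have "1 < X powr (1 / p)" using p by (intro gr_one_powr) auto
      then show False using h by simp
    qed
  qed
  then show ?thesis using N by (simp add: X_def field_simps)
qed

lemma ball_abs:
  assumes p: "1 \<le> p" and N: "1 \<le> N" and f: "f \<in> unit_ball_Lp p N" and i: "i < N"
  shows "\<bar>f i\<bar> \<le> real N"
proof (rule ccontr)
  assume "\<not> \<bar>f i\<bar> \<le> real N"
  then have big: "real N < \<bar>f i\<bar>" by simp
  then have g1: "1 \<le> \<bar>f i\<bar>" using N by simp
  have "\<bar>f i\<bar> = \<bar>f i\<bar> powr 1" using g1 by simp
  also have "\<dots> \<le> \<bar>f i\<bar> powr p" using g1 p by (intro powr_mono) auto
  also have "\<dots> \<le> (\<Sum>i<N. \<bar>f i\<bar> powr p)"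
    using i by (intro member_le_sum) auto
  also have "\<dots> \<le> real N" by (rule ball_sum[OF p N f])
  finally show False using big by simp
qed

lemma ball_count:
  assumes p: "1 \<le> p" and N: "1 \<le> N" and f: "f \<in> unit_ball_Lp p N"
  shows "real (card {i. i < N \<and> real M \<le> \<bar>f i\<bar>}) * real M powr p \<le> real N"
proof -
  define A where "A = {i. i < N \<and> real M \<le> \<bar>f i\<bar>}"
  have A: "A \<subseteq> {..<N}" by (auto simp: A_def)
  have "real (card A) * real M powr p = (\<Sum>i\<in>A. real M powr p)" by simp
  also have "\<dots> \<le> (\<Sum>i\<in>A. \<bar>f i\<bar> powr p)"
    using p by (intro sum_mono powr_mono2) (auto simp: A_def)
  also have "\<dots> \<le> (\<Sum>i<N. \<bar>f i\<bar> powr p)"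
    using A by (intro sum_mono2) auto
  also have "\<dots> \<le> real N" by (rule ball_sum[OF p N f])
  finally show ?thesis by (simp add: A_def)
qed

lemma coupon:
  fixes K L j :: nat
  assumes K1: "1 \<le> K" and K2: "K < 2 ^ (j + 1)" and L: "2 ^ (j + 1) * (real j + 3) / q0 \<le> real L"
  shows "real K * (1 - q0 / K) ^ L \<le> 1/4"
proof -
  have q: "0 < q0" "q0 \<le> 1" using q0_pos q0_le1 by auto
  define x where "x = q0 / K"
  have x0: "0 \<le> x" and x1: "x \<le> 1" using q K1 by (auto simp: x_def field_simps)
  have "(1 - x) ^ L \<le> exp (- x) ^ L"
    using x1 by (intro power_mono) (auto simp: exp_ge_add_one_self[of "-x", simplified])
  also have "\<dots> = exp (- (x * L))" by (simp add: exp_of_nat_mult[symmetric] mult.commute)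
  also have "\<dots> \<le> exp (- (real j + 3))"
  proof -
    have "2 ^ (j + 1) * (real j + 3) \<le> q0 * real L" using L q by (simp add: field_simps)
    moreover have "real K * (real j + 3) \<le> 2 ^ (j + 1) * (real j + 3)"
    proof -
      have "real K \<le> 2 ^ (j + 1)" using K2 by (metis of_nat_less_numeral_power_cancel_iff less_imp_le)
      then show ?thesis by (intro mult_right_mono) auto
    qed
    ultimately have "real j + 3 \<le> x * L" using K1 by (simp add: x_def field_simps)
    then show ?thesis by simp
  qed
  also have "\<dots> = inverse (exp (real j + 3))" by (simp only: exp_minus)
  also have "inverse (exp (real j + 3)) = inverse (exp 1 ^ (j + 3))" using exp_of_nat_mult[of "j + 3" 1] by simp
  also have "\<dots> \<le> inverse (2 ^ (j + 3))"
  proof -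
    have "2 \<le> exp (1::real)" using exp_ge_add_one_self[of 1] by simp
    then have "(2::real) ^ (j + 3) \<le> exp 1 ^ (j + 3)" by (intro power_mono) auto
    then show ?thesis by (intro le_imp_inverse_le) auto
  qed
  finally have b: "(1 - x) ^ L \<le> inverse (2 ^ (j + 3))" .
  have "real K * (1 - x) ^ L \<le> 2 ^ (j + 1) * inverse (2 ^ (j + 3))"
  proof (rule mult_mono)
    show "real K \<le> 2 ^ (j + 1)" using K2 by (metis of_nat_less_numeral_power_cancel_iff less_imp_le)
  qed (use b x1 in auto)
  also have "\<dots> = 1/4" by (simp add: power_add field_simps)
  finally show ?thesis by (simp add: x_def)
qed

lemma sqrt2_sum: "(\<Sum>j<Suc J. sqrt (2 ^ j)) \<le> 4 * sqrt (2 ^ J :: real)"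
proof (induction J)
  case 0 then show ?case by simp
next
  case (Suc J)
  have s: "sqrt (2 ^ Suc J :: real) = sqrt 2 * sqrt (2 ^ J)" by (simp add: real_sqrt_mult)
  have s2: "3 \<le> 3 * sqrt (2::real) - 1" 
  proof -
    have "(4/3::real)^2 \<le> (sqrt 2)^2" by (simp add: power2_eq_square)
    then have "4/3 \<le> sqrt (2::real)" by (rule power2_le_imp_le) simp
    then show ?thesis by simp
  qed
  have "(\<Sum>j<Suc (Suc J). sqrt (2 ^ j)) = (\<Sum>j<Suc J. sqrt (2 ^ j)) + sqrt (2 ^ Suc J :: real)" by simp
  also have "\<dots> \<le> 4 * sqrt (2 ^ J) + sqrt 2 * sqrt (2 ^ J)" using Suc s by simp
  also have "\<dots> \<le> 4 * (sqrt 2 * sqrt (2 ^ J))"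
  proof -
    have "0 \<le> sqrt (2 ^ J :: real)" by simp
    then have "4 * sqrt (2 ^ J) \<le> 3 * sqrt 2 * sqrt (2 ^ J :: real)"
    proof -
      have "4 \<le> 3 * sqrt (2::real)" using s2 by simp
      then show ?thesis by (intro mult_right_mono) auto
    qed
    then show ?thesis by (simp add: algebra_simps)
  qed
  finally show ?case using s by simp
qed

definition qry :: "nat \<Rightarrow> nat \<Rightarrow> nat \<Rightarrow> (real \<Rightarrow> nat) \<Rightarrow> (nat, real) qquery" where
  "qry N m1 r beta = \<lparr>qm = m1 + r, qm1 = m1, qm2 = r, qZ = {..<N}, qtau = id, qbeta = beta\<rparr>"

definition stg :: "nat \<Rightarrow> nat \<Rightarrow> nat \<Rightarrow> (real \<Rightarrow> nat) \<Rightarrow> nat \<Rightarrow> (nat, real) nm_alg" where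
  "stg N m1 r beta t = \<lparr>nm_query = qry N m1 r beta, nm_U = map cm (gsetup.stageR m1 r t)\<rparr>"

lemma qry_valid:
  assumes "1 \<le> N" "N < 2 ^ m1" "1 \<le> m1" "1 \<le> r" "\<And>v. beta v < 2 ^ r"
  shows "valid_query {..<N} (qry N m1 r beta)"
  using assms unfolding valid_query_def qry_def by (auto simp: lessThan_empty_iff)

context gsetup
begin

lemma nm_queries_stg: "nm_queries (stg N m1 r beta t) = t + 2"
  by (simp add: nm_queries_def stg_def stageR_def)

lemma qry_img:
  assumes bt: "\<And>i. bt i = (if i < N then beta (f i) else 0)"
  shows "query_image (qry N m1 r beta) f c = img c"
proof (cases "c div BB < N")
  case True
  then show ?thesis unfolding query_image_def img_def qry_def Let_def using bt
    by (simp add: BB_def)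
next
  case False
  then have "bt (c div BB) = 0" using bt by simp
  then have "img c = c" unfolding img_def by simp
  then show ?thesis unfolding query_image_def qry_def Let_def using False
    by (simp add: BB_def)
qed

lemma valid_stg:
  assumes "valid_query D (qry N m1 r beta)"
  shows "valid_nm_alg D (stg N m1 r beta t)"
  using assms unitary_stage[of t] unfolding valid_nm_alg_def stg_def
  by (simp add: qry_def dd_eq stageR_def)

lemma Pst:
  assumes bt: "\<And>i. bt i = (if i < N then beta (f i) else 0)" and c: "c < dd"
  shows "(cmod (nm_run (stg N m1 r beta t) f c 0))^2
     = ((Gr ^^ t) (\<lambda>_. uu) (c div BB))^2 * (if c mod BB = bt (c div BB) then 1 else 0)"
proof -
  define X where "X = sg (c div BB) * (Gr ^^ t) (\<lambda>_. uu) (c div BB) * (if c mod BB = bt (c div BB) then 1 else (0::real))"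
  have e: "nm_run (stg N m1 r beta t) f c 0 = complex_of_real X"
    unfolding X_def by (rule nm_run_stage[OF _ _ _ qry_img[OF bt] c]) (simp_all add: stg_def qry_def)
  have "(cmod (nm_run (stg N m1 r beta t) f c 0))^2 = X^2" by (simp only: e norm_of_real power2_abs)
  moreover have "(sg (c div BB))^2 = 1" by (simp add: sg_def power_even_eq[symmetric] flip: power_mult)
  ultimately show ?thesis by (simp add: X_def power_mult_distrib)
qed

end

lemma exists_dyadic: "1 \<le> (K::nat) \<Longrightarrow> \<exists>j. 2 ^ j \<le> K \<and> K < 2 ^ (j + 1)"
proof (induction K rule: less_induct)
  case (less K)
  show ?case
  proof (cases "K = 1")
    case True then show ?thesis by (intro exI[of _ 0]) simp
  next
    case False
    then have "1 \<le> K div 2" "K div 2 < K" using less.prems by auto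
    then obtain j where j: "2 ^ j \<le> K div 2" "K div 2 < 2 ^ (j + 1)" using less.IH by blast
    show ?thesis
    proof (intro exI[of _ "j + 1"] conjI)
      show "2 ^ (j + 1) \<le> K" using j(1) by simp
      show "K < 2 ^ (j + 1 + 1)" using j(2) by simp
    qed
  qed
qed

context gsetup
begin

definition "ci i = i * BB + bt i"

lemma err_main:
  fixes N M :: nat and beta :: "real \<Rightarrow> nat" and f :: "nat \<Rightarrow> real" and code :: "real \<Rightarrow> nat"
    and dl V :: real and J :: nat and tg Lg :: "nat \<Rightarrow> nat" and phi :: "nat list \<Rightarrow> real"
    and A :: "(nat, real, real) qalg"
  assumes bt: "\<And>i. bt i = (if i < N then beta (f i) else 0)"
    and beta_def: "\<And>v. beta v = (if real M \<le> \<bar>v\<bar> then 1 else 0) + 2 * code v"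
    and code_ok: "\<And>i. i < N \<Longrightarrow> \<bar>f i - (real (code (f i)) * dl - V)\<bar> \<le> dl"
    and N: "1 \<le> N" "2 * N \<le> Np"
    and KR: "card {i. i < N \<and> real M \<le> \<bar>f i\<bar>} < 2 ^ (J + 1)"
    and tg: "\<And>j. tg j = nat \<lfloor>1 / (8 * sqrt (2 ^ j / real Np))\<rfloor>"
    and Lg: "\<And>j. 2 ^ (j + 1) * (real j + 3) / q0 \<le> real (Lg j)"
    and phi: "phi = (\<lambda>xs. (1 / real N) * (\<Sum>x\<in>{x \<in> set xs. odd (x mod BB)}. real ((x mod BB) div 2) * dl - V))"
    and A: "A = \<lparr>q_algs = concat (map (\<lambda>j. replicate (Lg j) (stg N m1 r beta (tg j))) [0..<Suc J]),
                 q_b = (\<lambda>_ _. 0), q_phi = phi\<rparr>"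
    and dl: "0 < dl"
    and vq: "valid_query {..<N} (qry N m1 r beta)"
  shows "q_err (S_NM' N M) A f \<le> ereal dl"
proof -
  define algs where "algs = concat (map (\<lambda>j. replicate (Lg j) (stg N m1 r beta (tg j))) [0..<Suc J])"
  define L where "L = length algs"
  define P where "P = (\<lambda>B x. (cmod (nm_run B f x 0))^2)"
  have algsA: "q_algs A = algs" by (simp add: A algs_def)
  have F1: "B \<in> set algs \<Longrightarrow> \<exists>t. B = stg N m1 r beta t" for B
    unfolding algs_def by auto
  have qmB: "B \<in> set algs \<Longrightarrow> 2 ^ qm (nm_query B) = dd" for B
    using F1[of B] by (auto simp: stg_def qry_def dd_eq)
  have validB: "B \<in> set algs \<Longrightarrow> valid_nm_alg {..<N} B" for B
    using F1[of B] valid_stg[OF vq] by auto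
  have qk: "q_k A = L" by (simp add: q_k_def algsA L_def)
  have F3: "outcomes A = PL (\<lambda>_. {..<dd}) L"
  proof -
    have "\<And>i. i < L \<Longrightarrow> 2 ^ q_qubits A i = dd"
      using qmB unfolding q_qubits_def algsA L_def by (simp add: nth_mem)
    then show ?thesis unfolding outcomes_def prefix_outcomes_def PL_def qk by auto
  qed
  have F4: "outcome_prob A f xs = (\<Prod>l<L. P (algs ! l) (xs ! l))" for xs
    unfolding outcome_prob_def qk algsA P_def by (simp add: A)
  have F5: "B \<in> set algs \<Longrightarrow> (\<Sum>x<dd. P B x) = 1" for B
    using nm_run_norm[OF validB, of B 0 f] qmB[of B] Np_ge2 BB_pos unfolding P_def by (simp add: dd_def)
  have P0: "0 \<le> P B x" for B x by (simp add: P_def)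
  have P1: "B \<in> set algs \<Longrightarrow> x < dd \<Longrightarrow> P B x \<le> 1" for B x
  proof -
    assume B: "B \<in> set algs" and x: "x < dd"
    have "P B x \<le> (\<Sum>x<dd. P B x)" using x P0 by (intro member_le_sum) auto
    then show ?thesis using F5[OF B] by simp
  qed
  have F6: "B \<in> set algs \<Longrightarrow> x < dd \<Longrightarrow> P B x \<noteq> 0 \<Longrightarrow> x mod BB = bt (x div BB)" for B x
  proof -
    assume B: "B \<in> set algs" and x: "x < dd" and nz: "P B x \<noteq> 0"
    obtain t where t: "B = stg N m1 r beta t" using F1[OF B] by blast
    show ?thesis using nz Pst[OF bt x, of t] unfolding P_def t by (auto split: if_splits)
  qed
  have Mk_eq: "Mk = {i. i < N \<and> real M \<le> \<bar>f i\<bar>}"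
    unfolding Mk_def using N by (auto simp: bt beta_def)
  have KN: "KK \<le> N" unfolding KK_def Mk_eq by (rule order.trans[OF card_mono[of "{..<N}"]]) auto
  have odd_bt: "i \<in> Mk \<Longrightarrow> bt i = 1 + 2 * code (f i)" for i
    unfolding Mk_eq by (auto simp: bt beta_def)
  have ci_mod: "ci i mod BB = bt i" and ci_div: "ci i div BB = i" for i
    unfolding ci_def using bt_BB by simp_all
  have ci_lt: "i \<in> Mk \<Longrightarrow> ci i < dd" for i
    unfolding ci_def Mk_def using bt_BB by (auto intro: block_lt)
  have F7: "\<bar>S_NM' N M f - phi xs\<bar> \<le> dl"
    if xs: "xs \<in> outcomes A" and nz: "outcome_prob A f xs \<noteq> 0" and all: "\<forall>i\<in>Mk. ci i \<in> set xs" for xs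
  proof -
    have len: "length xs = L" and xlt: "\<forall>l<L. xs ! l < dd" using xs unfolding F3 PL_def by auto
    have good: "x \<in> set xs \<Longrightarrow> x < dd \<and> x mod BB = bt (x div BB)" for x
    proof -
      assume "x \<in> set xs"
      then obtain l where l: "l < L" "x = xs ! l" using len by (auto simp: in_set_conv_nth)
      have "P (algs ! l) (xs ! l) \<noteq> 0" using nz l(1) unfolding F4 by auto
      then show ?thesis using F6[of "algs ! l" "xs ! l"] l xlt by (auto simp: L_def)
    qed
    define T where "T = {x \<in> set xs. odd (x mod BB)}"
    have T: "T = ci ` Mk"
    proof (intro equalityI subsetI)
      fix x assume "x \<in> T"
      then have x: "x \<in> set xs" "odd (x mod BB)" by (auto simp: T_def)
      then have g: "x < dd" "x mod BB = bt (x div BB)" using good by auto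
      have "x div BB \<in> Mk" using g x(2) div_lt[OF g(1)] by (simp add: Mk_def)
      moreover have "x = ci (x div BB)" unfolding ci_def using g(2) by (metis div_mult_mod_eq)
      ultimately show "x \<in> ci ` Mk" by blast
    next
      fix x assume "x \<in> ci ` Mk"
      then obtain i where i: "i \<in> Mk" "x = ci i" by blast
      then show "x \<in> T" using all ci_mod[of i] by (auto simp: T_def Mk_def)
    qed
    have inj: "inj_on ci Mk" by (rule inj_onI) (metis ci_div)
    have "phi xs = (1 / real N) * (\<Sum>i\<in>Mk. real ((ci i mod BB) div 2) * dl - V)"
      unfolding phi T_def[symmetric] T by (simp add: sum.reindex[OF inj])
    also have "(\<Sum>i\<in>Mk. real ((ci i mod BB) div 2) * dl - V) = (\<Sum>i\<in>Mk. real (code (f i)) * dl - V)"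
      by (intro sum.cong refl) (simp add: ci_mod odd_bt)
    finally have phiv: "phi xs = (1 / real N) * (\<Sum>i\<in>Mk. real (code (f i)) * dl - V)" .
    have Sv: "S_NM' N M f = (1 / real N) * (\<Sum>i\<in>Mk. f i)" unfolding S_NM'_def Mk_eq by simp
    have "\<bar>S_NM' N M f - phi xs\<bar> = (1 / real N) * \<bar>\<Sum>i\<in>Mk. f i - (real (code (f i)) * dl - V)\<bar>"
    proof -
      have "S_NM' N M f - phi xs = (1 / real N) * (\<Sum>i\<in>Mk. f i - (real (code (f i)) * dl - V))"
        unfolding Sv phiv by (simp only: sum_subtractf right_diff_distrib)
      then show ?thesis by (simp add: abs_mult)
    qed
    also have "\<dots> \<le> (1 / real N) * (\<Sum>i\<in>Mk. dl)"
    proof (intro mult_left_mono)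
      have "\<bar>\<Sum>i\<in>Mk. f i - (real (code (f i)) * dl - V)\<bar> \<le> (\<Sum>i\<in>Mk. \<bar>f i - (real (code (f i)) * dl - V)\<bar>)"
        by (rule sum_abs)
      also have "\<dots> \<le> (\<Sum>i\<in>Mk. dl)" using code_ok by (intro sum_mono) (auto simp: Mk_eq)
      finally show "\<bar>\<Sum>i\<in>Mk. f i - (real (code (f i)) * dl - V)\<bar> \<le> (\<Sum>i\<in>Mk. dl)" .
    qed simp
    also have "\<dots> = real KK * dl / real N" by (simp add: KK_def)
    also have "\<dots> \<le> dl" using KN N dl by (simp add: field_simps mult_right_mono)
    finally show ?thesis .
  qed
  have F8: "(\<Sum>xs\<in>{xs \<in> outcomes A. c \<notin> set xs}. outcome_prob A f xs) = (\<Prod>l<L. 1 - P (algs ! l) c)"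
    if c: "c < dd" for c
  proof -
    have "{xs \<in> outcomes A. c \<notin> set xs} = PL (\<lambda>_. {..<dd} - {c}) L"
      unfolding F3 PL_def by (auto simp: in_set_conv_nth)
    then have "(\<Sum>xs\<in>{xs \<in> outcomes A. c \<notin> set xs}. outcome_prob A f xs)
        = (\<Prod>l<L. \<Sum>x\<in>{..<dd} - {c}. P (algs ! l) x)"
      unfolding F4 using prod_PL[of "\<lambda>_. {..<dd} - {c}" "\<lambda>l x. P (algs ! l) x" L] by simp
    also have "\<dots> = (\<Prod>l<L. 1 - P (algs ! l) c)"
    proof (intro prod.cong refl)
      fix l assume "l \<in> {..<L}"
      then have B: "algs ! l \<in> set algs" by (simp add: L_def)
      show "(\<Sum>x\<in>{..<dd} - {c}. P (algs ! l) x) = 1 - P (algs ! l) c"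
        using F5[OF B] c by (simp add: sum_diff1)
    qed
    finally show ?thesis .
  qed
  define E where "E = {xs \<in> outcomes A. dl < norm (S_NM' N M f - q_phi A xs)}"
  have finO: "finite (outcomes A)" unfolding F3 by (rule PL_finite) simp
  have U: "(\<Sum>xs\<in>E. outcome_prob A f xs) \<le> (\<Sum>i\<in>Mk. \<Sum>xs\<in>{xs \<in> outcomes A. ci i \<notin> set xs}. outcome_prob A f xs)"
  proof -
    have op0: "0 \<le> outcome_prob A f xs" for xs unfolding F4 using P0 by (simp add: prod_nonneg)
    have "(\<Sum>xs\<in>E. outcome_prob A f xs) \<le> (\<Sum>xs\<in>E. \<Sum>i\<in>Mk. if ci i \<notin> set xs then outcome_prob A f xs else 0)"
    proof (intro sum_mono)
      fix xs assume xs: "xs \<in> E"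
      show "outcome_prob A f xs \<le> (\<Sum>i\<in>Mk. if ci i \<notin> set xs then outcome_prob A f xs else 0)"
      proof (cases "outcome_prob A f xs = 0")
        case True then show ?thesis using op0 by (simp add: sum_nonneg)
      next
        case False
        have "\<not> (\<forall>i\<in>Mk. ci i \<in> set xs)"
        proof
          assume "\<forall>i\<in>Mk. ci i \<in> set xs"
          then have "\<bar>S_NM' N M f - phi xs\<bar> \<le> dl" using F7 xs False by (simp add: E_def)
          then show False using xs by (simp add: E_def A)
        qed
        then obtain i where i: "i \<in> Mk" "ci i \<notin> set xs" by blast
        have "outcome_prob A f xs = (if ci i \<notin> set xs then outcome_prob A f xs else 0)" using i by simp
        also have "\<dots> \<le> (\<Sum>i\<in>Mk. if ci i \<notin> set xs then outcome_prob A f xs else 0)"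
          using i(1) Mk_fin op0 by (intro member_le_sum) auto
        finally show ?thesis .
      qed
    qed
    also have "\<dots> = (\<Sum>i\<in>Mk. \<Sum>xs\<in>E. if ci i \<notin> set xs then outcome_prob A f xs else 0)"
      by (rule sum.swap)
    also have "\<dots> \<le> (\<Sum>i\<in>Mk. \<Sum>xs\<in>{xs \<in> outcomes A. ci i \<notin> set xs}. outcome_prob A f xs)"
    proof (intro sum_mono)
      fix i assume "i \<in> Mk"
      have "(\<Sum>xs\<in>E. if ci i \<notin> set xs then outcome_prob A f xs else 0)
          = (\<Sum>xs\<in>{xs \<in> E. ci i \<notin> set xs}. outcome_prob A f xs)"
        by (simp add: sum.inter_filter[symmetric] finite_subset[OF _ finO] E_def)
      also have "\<dots> \<le> (\<Sum>xs\<in>{xs \<in> outcomes A. ci i \<notin> set xs}. outcome_prob A f xs)"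
        using finO op0 by (intro sum_mono2) (auto simp: E_def)
      finally show "(\<Sum>xs\<in>E. if ci i \<notin> set xs then outcome_prob A f xs else 0)
          \<le> (\<Sum>xs\<in>{xs \<in> outcomes A. ci i \<notin> set xs}. outcome_prob A f xs)" .
    qed
    finally show ?thesis .
  qed
  have main: "(\<Sum>xs\<in>E. outcome_prob A f xs) \<le> 1/4"
  proof (cases "KK = 0")
    case True
    then have "Mk = {}" using Mk_fin by (simp add: KK_def)
    then show ?thesis using U by simp
  next
    case False
    then have K1: "1 \<le> KK" by simp
    obtain j0 where j0: "2 ^ j0 \<le> KK" "KK < 2 ^ (j0 + 1)" using exists_dyadic[OF K1] by blast
    have j0J: "j0 < Suc J"
    proof -
      have "(2::nat) ^ j0 < 2 ^ (J + 1)" using j0(1) KR by (simp add: KK_def Mk_eq)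
      then have "j0 < J + 1" using power_less_imp_less_exp[of "2::nat" j0 "J + 1"] by simp
      then show ?thesis by simp
    qed
    have KNp: "KK < Np" "2 * KK \<le> Np" using KN N by auto
    define sa where "sa = sqrt (2 ^ j0 / real Np)"
    have Np0: "0 < real Np" using Np_ge2 by simp
    have ssv: "ss = sqrt (real KK / real Np)" by (simp add: ss_def uu_def real_sqrt_divide)
    have lower: "q0 / KK \<le> P (stg N m1 r beta (tg j0)) (ci i)" if i: "i \<in> Mk" for i
    proof -
      have iNp: "i < Np" and ibt: "odd (bt i)" using i by (auto simp: Mk_def)
      have "P (stg N m1 r beta (tg j0)) (ci i) = ((Gr ^^ tg j0) (\<lambda>_. uu) i)^2"
        unfolding P_def using Pst[OF bt ci_lt[OF i], of "tg j0"] by (simp add: ci_mod ci_div)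
      also have "\<dots> = (sin ((2 * real (tg j0) + 1) * th))^2 / KK"
        using grover_marked[OF _ KNp(1) iNp ibt, of "tg j0"] K1 by simp
      finally have e: "P (stg N m1 r beta (tg j0)) (ci i) = (sin ((2 * real (tg j0) + 1) * th))^2 / KK" .
      have "q0 \<le> (sin ((2 * real (nat \<lfloor>1 / (8 * sa)\<rfloor>) + 1) * arcsin ss))^2"
      proof (rule sin_lower)
        show "0 < sa" unfolding sa_def using Np0 by simp
        show "sa \<le> ss" unfolding sa_def ssv using j0(1) Np0
          by (intro real_sqrt_le_mono divide_right_mono) (simp_all add: of_nat_le_iff[symmetric])
        show "ss^2 < 2 * sa^2" unfolding sa_def ssv using j0(2) Np0
          by (simp add: field_simps) (metis of_nat_less_iff of_nat_mult of_nat_numeral of_nat_power power_Suc mult.commute)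
        show "ss^2 \<le> 1/2" unfolding ssv using KNp(2) Np0 by (simp add: field_simps)
      qed
      then have "q0 \<le> (sin ((2 * real (tg j0) + 1) * th))^2" by (simp add: tg sa_def th_def)
      then show ?thesis unfolding e using K1 by (simp add: divide_right_mono)
    qed
    have "(\<Sum>i\<in>Mk. \<Sum>xs\<in>{xs \<in> outcomes A. ci i \<notin> set xs}. outcome_prob A f xs) \<le> (\<Sum>i\<in>Mk. (1 - q0 / KK) ^ Lg j0)"
    proof (intro sum_mono)
      fix i assume i: "i \<in> Mk"
      define h where "h = (\<lambda>B. 1 - min 1 (P B (ci i)))"
      have h01: "0 \<le> h B \<and> h B \<le> 1" for B using P0[of B "ci i"] by (simp add: h_def)
      have "(\<Sum>xs\<in>{xs \<in> outcomes A. ci i \<notin> set xs}. outcome_prob A f xs) = (\<Prod>l<L. 1 - P (algs ! l) (ci i))"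
        by (rule F8[OF ci_lt[OF i]])
      also have "\<dots> = (\<Prod>l<L. h (algs ! l))"
        using P1 ci_lt[OF i] by (intro prod.cong refl) (auto simp: h_def L_def)
      also have "\<dots> = prod_list (map h algs)" unfolding L_def by (rule prod_list_nth)
      also have "\<dots> \<le> h (stg N m1 r beta (tg j0)) ^ Lg j0"
        unfolding algs_def by (rule prod_rep_bound[OF h01 j0J])
      also have "\<dots> \<le> (1 - q0 / KK) ^ Lg j0"
      proof (rule power_mono)
        have "stg N m1 r beta (tg j0) \<in> set algs"
        proof -
          have "1 \<le> Lg j0"
          proof -
            have "0 < 2 ^ (j0 + 1) * (real j0 + 3) / q0" using q0_pos by simp
            then show ?thesis using Lg[of j0] by linarith
          qed
          then have "stg N m1 r beta (tg j0) \<in> set (replicate (Lg j0) (stg N m1 r beta (tg j0)))" by simp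
          moreover have "replicate (Lg j0) (stg N m1 r beta (tg j0)) \<in> set (map (\<lambda>j. replicate (Lg j) (stg N m1 r beta (tg j))) [0..<Suc J])"
            using j0J by (simp del: upt_Suc) (intro imageI, simp)
          ultimately show ?thesis unfolding algs_def set_concat by blast
        qed
        then show "h (stg N m1 r beta (tg j0)) \<le> 1 - q0 / KK"
          using lower[OF i] P1 ci_lt[OF i] by (simp add: h_def)
      qed (use h01 in auto)
      finally show "(\<Sum>xs\<in>{xs \<in> outcomes A. ci i \<notin> set xs}. outcome_prob A f xs) \<le> (1 - q0 / KK) ^ Lg j0" .
    qed
    also have "\<dots> = real KK * (1 - q0 / KK) ^ Lg j0" by (simp add: KK_def)
    also have "\<dots> \<le> 1/4" by (rule coupon[OF K1 j0(2) Lg])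
    finally show ?thesis using U by simp
  qed
  show ?thesis unfolding q_err_def
    by (rule Inf_lower) (use main in \<open>auto simp: E_def\<close>)
qed

end

lemma exists_m1: "1 \<le> (N::nat) \<Longrightarrow> \<exists>m1. 2 * N \<le> 2 ^ m1 \<and> 2 ^ m1 \<le> 4 * N"
proof -
  assume N: "1 \<le> N"
  then obtain j where j: "2 ^ j \<le> 2 * N" "2 * N < 2 ^ (j + 1)" using exists_dyadic[of "2 * N"] by auto
  show ?thesis by (rule exI[of _ "j + 1"]) (use j in simp)
qed

lemma floor_log_facts:
  fixes R :: real assumes R: "1 \<le> R"
  shows "2 ^ nat \<lfloor>log 2 R\<rfloor> \<le> R" "R < 2 ^ (nat \<lfloor>log 2 R\<rfloor> + 1)" "real (nat \<lfloor>log 2 R\<rfloor>) \<le> log 2 R"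
proof -
  have l0: "0 \<le> log 2 R" using R by simp
  have e: "real (nat \<lfloor>log 2 R\<rfloor>) = of_int \<lfloor>log 2 R\<rfloor>" using l0 by simp
  show le: "real (nat \<lfloor>log 2 R\<rfloor>) \<le> log 2 R" unfolding e by simp
  have "(2::real) ^ nat \<lfloor>log 2 R\<rfloor> = 2 powr real (nat \<lfloor>log 2 R\<rfloor>)" by (simp add: powr_realpow)
  also have "\<dots> \<le> 2 powr log 2 R" using le by (intro powr_mono) auto
  also have "\<dots> = R" using R by simp
  finally show "2 ^ nat \<lfloor>log 2 R\<rfloor> \<le> R" .
  have "R = 2 powr log 2 R" using R by simp
  also have "\<dots> < 2 powr (real (nat \<lfloor>log 2 R\<rfloor>) + 1)" unfolding e by (intro powr_less_mono) linarith+
  also have "\<dots> = 2 ^ (nat \<lfloor>log 2 R\<rfloor> + 1)" by (simp add: powr_realpow[symmetric] powr_add)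
  finally show "R < 2 ^ (nat \<lfloor>log 2 R\<rfloor> + 1)" .
qed

lemma cost_bound:
  fixes R :: real and N Np J :: nat and tg Lg :: "nat \<Rightarrow> nat"
  assumes R: "1 \<le> R" "R \<le> real N" and Np: "real N \<le> real Np" "real Np \<le> 4 * real N"
    and J: "J = nat \<lfloor>log 2 R\<rfloor>"
    and tg: "\<And>j. tg j = nat \<lfloor>1 / (8 * sqrt (2 ^ j / real Np))\<rfloor>"
    and Lg: "\<And>j. Lg j = nat \<lceil>2 ^ (j + 1) * (real j + 3) / q0\<rceil>"
  shows "real (\<Sum>j<Suc J. Lg j * (tg j + 2)) \<le> 384 / q0 * sqrt (real N * R) * max (log 2 R) 1"
proof -
  have q: "0 < q0" "q0 \<le> 1" using q0_pos q0_le1 by auto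
  have J1: "2 ^ J \<le> R" and J3: "real J \<le> log 2 R" using floor_log_facts[OF R(1)] J by auto
  define b where "b = sqrt (real Np)"
  have b0: "0 < b" using R Np by (simp add: b_def)
  have termb: "real (Lg j) * (real (tg j) + 2) \<le> 12 * (real J + 3) * b / q0 * sqrt (2 ^ j)" if j: "j < Suc J" for j
  proof -
    define a where "a = sqrt (2 ^ j :: real)"
    have a0: "0 < a" by (simp add: a_def)
    have a2: "a^2 = 2 ^ j" by (simp add: a_def)
    have jN: "(2::real) ^ j \<le> real Np"
    proof -
      have "(2::real) ^ j \<le> 2 ^ J" using j by (intro power_increasing) auto
      then show ?thesis using J1 R Np by linarith
    qed
    have ab: "a \<le> b" unfolding a_def b_def using jN by (rule real_sqrt_le_mono)
    have sq: "sqrt (2 ^ j / real Np) = a / b" by (simp add: a_def b_def real_sqrt_divide)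
    have t1: "real (tg j) \<le> b / (8 * a)"
    proof -
      have "0 \<le> 1 / (8 * sqrt (2 ^ j / real Np))" by simp
      then have "real (tg j) \<le> 1 / (8 * sqrt (2 ^ j / real Np))" unfolding tg by linarith
      also have "\<dots> = b / (8 * a)" unfolding sq using a0 b0 by (simp add: field_simps)
      finally show ?thesis .
    qed
    have t2: "real (tg j) + 2 \<le> 3 * (b / a)"
    proof -
      have "1 \<le> b / a" using ab a0 by simp
      moreover have "b / (8 * a) \<le> b / a" using a0 b0 by (simp add: field_simps)
      ultimately show ?thesis using t1 by linarith
    qed
    have l1: "real (Lg j) \<le> 4 * a^2 * (real j + 3) / q0"
    proof -
      define z where "z = 2 ^ (j + 1) * (real j + 3) / q0"
      have z0: "1 \<le> z"
      proof -
        have "1 \<le> (2::real) ^ (j + 1)" by (rule one_le_power) simp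
        then have "1 * 1 \<le> (2::real) ^ (j + 1) * (real j + 3)" by (intro mult_mono) auto
        then have "1 \<le> (2::real) ^ (j + 1) * (real j + 3)" by simp
        also have "\<dots> \<le> 2 ^ (j + 1) * (real j + 3) / q0"
        proof -
          have X0: "0 \<le> (2::real) ^ (j + 1) * (real j + 3)" by simp
          show ?thesis using q X0 by (simp add: le_divide_eq mult_left_le)
        qed
        finally show ?thesis by (simp add: z_def)
      qed
      have "real (Lg j) \<le> z + 1" unfolding Lg z_def[symmetric] using z0 by linarith
      also have "\<dots> \<le> 2 * z" using z0 by simp
      also have "\<dots> = 4 * a^2 * (real j + 3) / q0" unfolding z_def a2 by (simp add: field_simps)
      finally show ?thesis .
    qed
    have "real (Lg j) * (real (tg j) + 2) \<le> (4 * a^2 * (real j + 3) / q0) * (3 * (b / a))"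
      using l1 t2 by (intro mult_mono) auto
    also have "\<dots> = 12 * (real j + 3) * b / q0 * a" using a0 q by (simp add: field_simps power2_eq_square)
    also have "\<dots> \<le> 12 * (real J + 3) * b / q0 * a"
      using j a0 b0 q by (intro mult_right_mono divide_right_mono mult_right_mono) auto
    finally show ?thesis by (simp add: a_def)
  qed
  have "real (\<Sum>j<Suc J. Lg j * (tg j + 2)) = (\<Sum>j<Suc J. real (Lg j) * (real (tg j) + 2))"
    by (simp only: of_nat_sum of_nat_mult of_nat_add of_nat_numeral)
  also have "\<dots> \<le> (\<Sum>j<Suc J. 12 * (real J + 3) * b / q0 * sqrt (2 ^ j))"
    using termb by (intro sum_mono) auto
  also have "\<dots> = 12 * (real J + 3) * b / q0 * (\<Sum>j<Suc J. sqrt (2 ^ j))" by (rule sum_distrib_left[symmetric])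
  also have "\<dots> \<le> 12 * (real J + 3) * b / q0 * (4 * sqrt (2 ^ J))"
    using sqrt2_sum[of J] b0 q by (intro mult_left_mono) auto
  also have "\<dots> \<le> 12 * (4 * max (log 2 R) 1) * (2 * sqrt (real N)) / q0 * (4 * sqrt R)"
  proof -
    have "real J + 3 \<le> 4 * max (log 2 R) 1" using J3 by linarith
    moreover have "b \<le> 2 * sqrt (real N)"
    proof -
      have "b \<le> sqrt (4 * real N)" unfolding b_def using Np by (intro real_sqrt_le_mono) auto
      also have "\<dots> = 2 * sqrt (real N)" by (simp add: real_sqrt_mult)
      finally show ?thesis .
    qed
    moreover have "sqrt (2 ^ J) \<le> sqrt R" using J1 by (intro real_sqrt_le_mono) auto
    ultimately show ?thesis using b0 q
      by (intro mult_mono divide_right_mono) (auto intro: mult_nonneg_nonneg)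
  qed
  also have "\<dots> = 384 / q0 * sqrt (real N * R) * max (log 2 R) 1"
    by (simp add: real_sqrt_mult field_simps)
  finally show ?thesis .
qed

lemma code_acc:
  fixes v V dl :: real
  assumes v: "\<bar>v\<bar> \<le> V" and dl: "0 < dl"
  shows "\<bar>v - (real (min (nat \<lfloor>(v + V) / dl\<rfloor>) (nat \<lceil>2 * V / dl\<rceil>)) * dl - V)\<bar> \<le> dl"
proof -
  define z where "z = (v + V) / dl"
  have z0: "0 \<le> z" using v dl by (simp add: z_def)
  have z2: "z \<le> 2 * V / dl" using v dl by (simp add: z_def divide_right_mono)
  have fl0: "0 \<le> \<lfloor>z\<rfloor>" using z0 by simp
  have "\<lfloor>z\<rfloor> \<le> \<lceil>2 * V / dl\<rceil>" using z2 by (meson floor_le_ceiling order.trans floor_mono)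
  then have mn: "min (nat \<lfloor>z\<rfloor>) (nat \<lceil>2 * V / dl\<rceil>) = nat \<lfloor>z\<rfloor>" by simp
  have r: "real (nat \<lfloor>z\<rfloor>) = of_int \<lfloor>z\<rfloor>" using fl0 by simp
  have "v - (of_int \<lfloor>z\<rfloor> * dl - V) = (z - of_int \<lfloor>z\<rfloor>) * dl" using dl by (simp add: z_def field_simps)
  moreover have "0 \<le> z - of_int \<lfloor>z\<rfloor>" "z - of_int \<lfloor>z\<rfloor> \<le> 1" by linarith+
  ultimately have "\<bar>v - (of_int \<lfloor>z\<rfloor> * dl - V)\<bar> \<le> dl" using dl
    by (simp add: abs_mult mult_le_cancel_right1)
  then show ?thesis unfolding z_def[symmetric] mn r .
qed

lemma less_2pow: "2 * C + 1 < (2::nat) ^ (C + 2)"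
proof -
  have "C < 2 ^ C" by (rule less_exp)
  moreover have "(2::nat) ^ (C + 2) = 4 * 2 ^ C" by simp
  ultimately show ?thesis by linarith
qed

lemma main_case:
  fixes p :: real and N M :: nat and dl :: real
  assumes p: "1 \<le> p" and N: "1 \<le> N" and M: "1 \<le> M" and R1: "1 \<le> real N / real M powr p" and dl: "0 < dl"
  shows "\<exists>A :: (nat, real, real) qalg. valid_qalg {..<N} A \<and>
     real (n_q A) \<le> 384 / q0 * sqrt (real N * (real N / real M powr p)) * max (log 2 (real N / real M powr p)) 1 \<and>
     (\<forall>f\<in>unit_ball_Lp p N. q_err (S_NM' N M) A f \<le> ereal dl)"
proof -
  define R where "R = real N / real M powr p"
  obtain m1 where m1: "2 * N \<le> 2 ^ m1" "2 ^ m1 \<le> 4 * N" using exists_m1[OF N] by blast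
  have m1pos: "1 \<le> m1"
  proof (rule ccontr)
    assume "\<not> 1 \<le> m1"
    then have "m1 = 0" by simp
    then show False using m1 N by simp
  qed
  define V where "V = real N"
  define Cmax where "Cmax = nat \<lceil>2 * V / dl\<rceil>"
  define code where "code = (\<lambda>v::real. min (nat \<lfloor>(v + V) / dl\<rfloor>) Cmax)"
  define r where "r = Cmax + 2"
  define beta where "beta = (\<lambda>v::real. (if real M \<le> \<bar>v\<bar> then 1 else 0) + 2 * code v)"
  define Np :: nat where "Np = 2 ^ m1"
  define J where "J = nat \<lfloor>log 2 R\<rfloor>"
  define tg where "tg = (\<lambda>j::nat. nat \<lfloor>1 / (8 * sqrt (2 ^ j / real Np))\<rfloor>)"
  define Lg where "Lg = (\<lambda>j::nat. nat \<lceil>2 ^ (j + 1) * (real j + 3) / q0\<rceil>)"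
  define BB :: nat where "BB = 2 ^ r"
  define phi where "phi = (\<lambda>xs. (1 / real N) * (\<Sum>x\<in>{x \<in> set xs. odd (x mod BB)}. real ((x mod BB) div 2) * dl - V))"
  define algs where "algs = concat (map (\<lambda>j. replicate (Lg j) (stg N m1 r beta (tg j))) [0..<Suc J])"
  define A :: "(nat, real, real) qalg" where "A = \<lparr>q_algs = algs, q_b = (\<lambda>_ _. 0), q_phi = phi\<rparr>"
  have r1: "1 \<le> r" by (simp add: r_def)
  have beta_lt: "beta v < 2 ^ r" for v
  proof -
    have "code v \<le> Cmax" by (simp add: code_def)
    then have "beta v \<le> 2 * Cmax + 1" by (simp add: beta_def)
    also have "\<dots> < 2 ^ r" unfolding r_def by (rule less_2pow)
    finally show ?thesis .
  qed
  have gs: "gsetup m1 r bt" if "\<And>i. bt i < 2 ^ r" for bt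
    unfolding gsetup_def using r1 m1pos that by auto
  have Nlt: "N < 2 ^ m1" using m1 N by linarith
  have vq: "valid_query {..<N} (qry N m1 r beta)" by (rule qry_valid[OF N Nlt m1pos r1 beta_lt])
  interpret G0: gsetup m1 r "\<lambda>_. 0" by (rule gs) simp
  have Lg1: "1 \<le> Lg j" for j
  proof -
    have "0 < 2 ^ (j + 1) * (real j + 3) / q0" using q0_pos by simp
    then show ?thesis unfolding Lg_def by linarith
  qed
  have Lg2: "2 ^ (j + 1) * (real j + 3) / q0 \<le> real (Lg j)" for j
    unfolding Lg_def by linarith
  have F1: "B \<in> set algs \<Longrightarrow> \<exists>t. B = stg N m1 r beta t" for B
    unfolding algs_def by auto
  have stg_in: "stg N m1 r beta (tg j) \<in> set algs" if j: "j < Suc J" for j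
  proof -
    have "stg N m1 r beta (tg j) \<in> set (replicate (Lg j) (stg N m1 r beta (tg j)))" using Lg1[of j] by simp
    moreover have "replicate (Lg j) (stg N m1 r beta (tg j)) \<in> set (map (\<lambda>j. replicate (Lg j) (stg N m1 r beta (tg j))) [0..<Suc J])"
      using j by (simp del: upt_Suc) (intro imageI, simp)
    ultimately show ?thesis unfolding algs_def set_concat by blast
  qed
  have valid: "valid_qalg {..<N} A"
    unfolding valid_qalg_def
  proof (intro conjI ballI allI impI)
    have "algs \<noteq> []" using stg_in[of 0] by auto
    then show "1 \<le> q_k A" by (simp add: q_k_def A_def Suc_le_eq)
  next
    fix B assume "B \<in> set (q_algs A)"
    then obtain t where "B = stg N m1 r beta t" using F1 by (auto simp: A_def)
    then show "valid_nm_alg {..<N} B" using G0.valid_stg[OF vq] by simp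
  next
    fix l xs show "q_b A l xs < 2 ^ q_qubits A l" by (simp add: A_def)
  qed
  have nq: "n_q A = (\<Sum>j<Suc J. Lg j * (tg j + 2))"
  proof -
    have "n_q A = sum_list (map nm_queries algs)"
      unfolding n_q_def q_k_def by (simp add: A_def sum_list_nth)
    also have "\<dots> = (\<Sum>j<Suc J. Lg j * nm_queries (stg N m1 r beta (tg j)))"
      unfolding algs_def by (rule sum_rep)
    also have "\<dots> = (\<Sum>j<Suc J. Lg j * (tg j + 2))" by (simp add: G0.nm_queries_stg)
    finally show ?thesis .
  qed
  have MP: "1 \<le> real M powr p" using M p by (simp add: ge_one_powr_ge_zero)
  have RN: "R \<le> real N" unfolding R_def using MP N by (simp add: divide_le_eq)
  have cost: "real (n_q A) \<le> 384 / q0 * sqrt (real N * R) * max (log 2 R) 1"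
    unfolding nq
  proof (rule cost_bound[OF R1[folded R_def] RN])
    show "real N \<le> real Np" using m1 by (simp add: Np_def)
    show "real Np \<le> 4 * real N" using m1 by (simp add: Np_def) (metis of_nat_le_iff of_nat_numeral of_nat_power of_nat_mult)
  qed (simp_all add: J_def tg_def Lg_def)
  have err: "q_err (S_NM' N M) A f \<le> ereal dl" if f: "f \<in> unit_ball_Lp p N" for f
  proof -
    define bt where "bt = (\<lambda>i. if i < N then beta (f i) else 0)"
    interpret G: gsetup m1 r bt by (rule gs) (simp add: bt_def beta_lt)
    have GNp: "G.Np = Np" by (simp add: G.Np_def Np_def)
    have GBB: "G.BB = BB" by (simp add: G.BB_def BB_def)
    show ?thesis
    proof (rule G.err_main[where N = N and M = M and beta = beta and f = f and code = code and dl = dl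
        and V = V and J = J and tg = tg and Lg = Lg and phi = phi and A = A])
      show "\<And>i. bt i = (if i < N then beta (f i) else 0)" by (simp add: bt_def)
      show "\<And>v. beta v = (if real M \<le> \<bar>v\<bar> then 1 else 0) + 2 * code v" by (simp add: beta_def)
      show "\<And>i. i < N \<Longrightarrow> \<bar>f i - (real (code (f i)) * dl - V)\<bar> \<le> dl"
        unfolding code_def Cmax_def using code_acc ball_abs[OF p N f] dl by (simp add: V_def)
      show "1 \<le> N" by (rule N)
      show "2 * N \<le> G.Np" using m1 by (simp add: GNp Np_def)
      show "card {i. i < N \<and> real M \<le> \<bar>f i\<bar>} < 2 ^ (J + 1)"
      proof -
        have "real (card {i. i < N \<and> real M \<le> \<bar>f i\<bar>}) * real M powr p \<le> real N" by (rule ball_count[OF p N f])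
        then have "real (card {i. i < N \<and> real M \<le> \<bar>f i\<bar>}) \<le> R" unfolding R_def using MP M by (simp add: le_divide_eq)
        also have "R < 2 ^ (J + 1)" unfolding J_def using floor_log_facts(2)[OF R1[folded R_def]] .
        finally show ?thesis by (metis of_nat_less_numeral_power_cancel_iff)
      qed
      show "\<And>j. tg j = nat \<lfloor>1 / (8 * sqrt (2 ^ j / real G.Np))\<rfloor>" by (simp add: tg_def GNp)
      show "\<And>j. 2 ^ (j + 1) * (real j + 3) / q0 \<le> real (Lg j)" by (rule Lg2)
      show "phi = (\<lambda>xs. 1 / real N * (\<Sum>x\<in>{x \<in> set xs. odd (x mod G.BB)}. real (x mod G.BB div 2) * dl - V))"
        by (simp add: phi_def GBB)
      show "A = \<lparr>q_algs = concat (map (\<lambda>j. replicate (Lg j) (stg N m1 r beta (tg j))) [0..<Suc J]), q_b = \<lambda>_ _. 0, q_phi = phi\<rparr>"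
        by (simp add: A_def algs_def)
      show "0 < dl" by (rule dl)
      show "valid_query {..<N} (qry N m1 r beta)" by (rule vq)
    qed
  qed
  show ?thesis using valid cost err unfolding R_def by blast
qed

theorem proposition1:
  fixes p :: real
  assumes "1 \<le> p"
  shows "\<exists>c>0. \<forall>n M N :: nat. n \<ge> 1 \<longrightarrow> M \<ge> 1 \<longrightarrow> N \<ge> 1 \<longrightarrow>
           real n \<ge> c * real M powr (- p / 2) * real N
                      * max (log 2 (real M powr (- p) * real N)) 1 \<longrightarrow>
           min_query_err {..<N} n (S_NM' N M) (unit_ball_Lp p N) = 0"
proof (intro exI[of _ "384 / q0"] conjI allI impI)
  show "0 < 384 / q0" using q0_pos by simp
  fix n M N :: nat
  assume n: "n \<ge> 1" and M: "M \<ge> 1" and N: "N \<ge> 1"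
    and hyp: "real n \<ge> 384 / q0 * real M powr (- p / 2) * real N * max (log 2 (real M powr (- p) * real N)) 1"
  have p: "1 \<le> p" by (rule assms)
  define R where "R = real N / real M powr p"
  have M0: "0 < real M" using M by simp
  have Req: "real M powr (- p) * real N = R" by (simp add: R_def powr_minus divide_inverse mult.commute)
  have sq: "sqrt (real N * R) = real M powr (- p / 2) * real N"
  proof -
    have "real N * R = (real N)^2 * real M powr (- p)" using Req by (simp add: power2_eq_square mult_ac)
    then have "sqrt (real N * R) = real N * sqrt (real M powr (- p))" by (simp add: real_sqrt_mult)
    also have "sqrt (real M powr (- p)) = (real M powr (- p)) powr (1/2)" by (simp add: powr_half_sqrt)
    also have "\<dots> = real M powr (- p / 2)" by (simp add: powr_powr)
    finally show ?thesis by simp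
  qed
  have F0: "unit_ball_Lp p N \<noteq> {}"
  proof -
    have "(\<lambda>_. 0) \<in> unit_ball_Lp p N" by (simp add: unit_ball_Lp_def Lp_norm_def)
    then show ?thesis by blast
  qed
  have lower: "0 \<le> min_query_err {..<N} n (S_NM' N M) (unit_ball_Lp p N)"
    by (rule min_query_err_nonneg[OF F0])
  have upper: "min_query_err {..<N} n (S_NM' N M) (unit_ball_Lp p N) \<le> 0"
  proof (cases "1 \<le> R")
    case True
    show ?thesis
    proof (rule ereal_le_epsilon2)
      fix e :: real assume e: "0 < e"
      obtain A :: "(nat, real, real) qalg" where vA: "valid_qalg {..<N} A"
        and cA: "real (n_q A) \<le> 384 / q0 * sqrt (real N * (real N / real M powr p)) * max (log 2 (real N / real M powr p)) 1"
        and eA: "\<forall>f\<in>unit_ball_Lp p N. q_err (S_NM' N M) A f \<le> ereal e"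
        using main_case[OF p N M True[unfolded R_def] e] by blast
      have "real (n_q A) \<le> real n"
        using cA hyp unfolding R_def[symmetric] sq Req by (simp add: mult_ac)
      then have nA: "n_q A \<le> n" by simp
      have "min_query_err {..<N} n (S_NM' N M) (unit_ball_Lp p N) \<le> q_err_F (S_NM' N M) A (unit_ball_Lp p N)"
        unfolding min_query_err_def by (rule INF_lower) (simp add: vA nA)
      also have "\<dots> \<le> ereal e" unfolding q_err_F_def by (rule SUP_least) (use eA in auto)
      finally show "min_query_err {..<N} n (S_NM' N M) (unit_ball_Lp p N) \<le> 0 + ereal e" by simp
    qed
  next
    case False
    define Q0 :: "(nat, real) qquery" where "Q0 = \<lparr>qm = 2, qm1 = 1, qm2 = 1, qZ = {0}, qtau = (\<lambda>_. 0), qbeta = (\<lambda>_. 0)\<rparr>"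
    define B0 :: "(nat, real) nm_alg" where "B0 = \<lparr>nm_query = Q0, nm_U = [cm idm]\<rparr>"
    define A0 :: "(nat, real, real) qalg" where "A0 = \<lparr>q_algs = [B0], q_b = (\<lambda>_ _. 0), q_phi = (\<lambda>_. 0)\<rparr>"
    have vA: "valid_qalg {..<N} A0"
      unfolding valid_qalg_def valid_nm_alg_def valid_query_def A0_def B0_def Q0_def q_k_def
      using N unitary_idm by auto
    have nA: "n_q A0 \<le> n" by (simp add: n_q_def q_k_def A0_def B0_def nm_queries_def)
    have zero: "S_NM' N M f = 0" if f: "f \<in> unit_ball_Lp p N" for f
    proof -
      have MP: "0 < real M powr p" using M0 by simp
      have NR: "real N < real M powr p" using False MP unfolding R_def by (simp add: divide_less_eq)
      have "real (card {i. i < N \<and> real M \<le> \<bar>f i\<bar>}) * real M powr p \<le> real N" by (rule ball_count[OF p N f])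
      then have "real (card {i. i < N \<and> real M \<le> \<bar>f i\<bar>}) * real M powr p < 1 * real M powr p" using NR by simp
      then have "card {i. i < N \<and> real M \<le> \<bar>f i\<bar>} = 0" using MP by (simp only: mult_less_cancel_right) simp
      then have e: "{i. i < N \<and> real M \<le> \<bar>f i\<bar>} = {}" by simp
      show ?thesis unfolding S_NM'_def e by simp
    qed
    have "min_query_err {..<N} n (S_NM' N M) (unit_ball_Lp p N) \<le> q_err_F (S_NM' N M) A0 (unit_ball_Lp p N)"
      unfolding min_query_err_def by (rule INF_lower) (simp add: vA nA)
    also have "\<dots> \<le> 0" unfolding q_err_F_def
    proof (rule SUP_least)
      fix f assume f: "f \<in> unit_ball_Lp p N"
      show "q_err (S_NM' N M) A0 f \<le> 0" unfolding q_err_def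
        by (rule Inf_lower) (use zero[OF f] in \<open>auto simp: A0_def zero_ereal_def intro!: exI[of _ 0]\<close>)
    qed
    finally show ?thesis .
  qed
  show "min_query_err {..<N} n (S_NM' N M) (unit_ball_Lp p N) = 0" using lower upper by simp
qed

end
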